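(* Let $\mathfrak g$ and the infinite quiver $Q(\mathfrak g)$ be as in the context, and let $\mathbb C(\mathbf X)$ be the field of rational functions in the $X$-variables $X^i_n$ ($i\in S$, $n\in d\mathbb Z$) of $Q(\mathfrak g)$ with Poisson bracket $\{X_u,X_v\}=\varepsilon_{uv}X_uX_v$. Let $\mathbb C(s)$ be the field of rational functions in commuting variables $s_i(n)$ ($i\in S$, $n\in d\mathbb Z$) with the log-canonical Poisson bracket determined by: for $n<n'$, $\{s_i(n),s_i(n')\}=s_i(n)s_i(n')$ if $n'-n\in d_i\mathbb Z$; $\{s_i(n),s_j(n')\}=-\tfrac12 s_i(n)s_j(n')$ if $i\neq j$, $B_{ij}\neq0$ and $n'-n\in\min(d_i,d_j)\mathbb Z$; $\{s_i(n),s_j(n)\}=-\tfrac12 s_i(n)s_j(n)$ if $i<j$ and $B_{ij}\ne0$; all remaining brackets of generators being determined by antisymmetry or equal to $0$. Then the field embedding $\sigma:\mathbb C(\mathbf X)\to\mathbb C(s)$, $X^i_n\mapsto s_i(n)/s_i(n+d_i)$, is a Poisson map.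
   Context: Let $\mathfrak g$ be a finite-dimensional complex simple Lie algebra of rank $\ell$, $S=\{1,\dots,\ell\}$, of type $A_\ell$, $B_\ell$, $C_\ell$, $D_\ell$ ($\ell\ge4$), $E_{6,7,8}$, $F_4$ or $G_2$, labelled: $A_\ell,B_\ell,C_\ell$ chain $1-\cdots-\ell$ ($\alpha_\ell$ short in $B_\ell$, long in $C_\ell$); $D_\ell$: chain $1-\cdots-(\ell-1)$ plus edge $(\ell-2)-\ell$; $E_\ell$: chain $1-2-3-5-\cdots-\ell$ plus edge $3-4$; $F_4$: chain $1-2-3-4$, $\alpha_1,\alpha_2$ long; $G_2$: $\alpha_2$ long. $d_i=(\alpha_i,\alpha_i)/2$: $1$ in types $A,D,E$; $(1,\dots,1,\frac12)$ for $B_\ell$; $(1,\dots,1,2)$ for $C_\ell$; $(1,1,\frac12,\frac12)$ for $F_4$; $(1,3)$ for $G_2$; $d=\min d_i$; $C_{ij}=2(\alpha_i,\alpha_j)/(\alpha_i,\alpha_i)$, $B_{ij}=d_iC_{ij}$. Quiver $Q(\mathfrak g)$ on $\{v^i_n: i\in S, n\in d\mathbb Z\}$, arrows for all $n$: (simply-laced) orient Dynkin edges from larger to smaller label ($C(\mathfrak g)$); $v^i_n\to v^i_{n+1}$, and for each $i\to j$ in $C(\mathfrak g)$, $v^i_n\to v^j_n$ and $v^j_{n+1}\to v^i_n$. ($B_\ell$) $v^i_n\to v^i_{n+1}$ ($i\le\ell-1$); $v^i_n\to v^{i-1}_n$, $v^{i-1}_{n+1}\to v^i_n$ ($2\le i\le\ell-1$);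 $v^\ell_n\to v^\ell_{n+1/2}$, $v^\ell_n\to v^{\ell-1}_{n-1/2}$, $v^{\ell-1}_{n+1/2}\to v^\ell_n$. ($C_\ell$) $v^i_n\to v^i_{n+1}$ ($i\le\ell-1$); $v^i_n\to v^{i-1}_n$, $v^{i-1}_{n+1}\to v^i_n$ ($2\le i\le\ell-1$); $v^\ell_n\to v^\ell_{n+2}$, $v^\ell_n\to v^{\ell-1}_n$, $v^{\ell-1}_{n+2}\to v^\ell_n$. ($F_4$) $v^i_n\to v^i_{n+1}$ ($i=1,2$); $v^2_n\to v^1_n$, $v^1_{n+1}\to v^2_n$; $v^3_n\to v^3_{n+1/2}$, $v^3_n\to v^2_{n-1/2}$, $v^2_{n+1/2}\to v^3_n$; $v^4_n\to v^4_{n+1/2}$, $v^4_n\to v^3_n$, $v^3_{n+1/2}\to v^4_n$. ($G_2$) $v^1_n\to v^1_{n+1}$, $v^2_n\to v^2_{n+3}$, $v^2_n\to v^1_n$, $v^1_{n+3}\to v^2_n$. Exchange matrix $\varepsilon_{uv}=\#\{u\to v\}-\#\{v\to u\}$. *)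

theory Defs
  imports Complex_Main "HOL-Library.Poly_Mapping" "HOL-Library.Product_Lexorder"
    "HOL-Computational_Algebra.Fraction_Field"
begin

datatype cartan_type = TA nat | TB nat | TC nat | TD nat | TE nat | TF4 | TG2

definition valid_type :: "cartan_type \<Rightarrow> bool" where
  "valid_type t = (case t of TA l \<Rightarrow> l \<ge> 1 | TB l \<Rightarrow> l \<ge> 2 | TC l \<Rightarrow> l \<ge> 2
     | TD l \<Rightarrow> l \<ge> 4 | TE l \<Rightarrow> l \<in> {6,7,8} | TF4 \<Rightarrow> True | TG2 \<Rightarrow> True)"

definition rank :: "cartan_type \<Rightarrow> nat" where
  "rank t = (case t of TA l \<Rightarrow> l | TB l \<Rightarrow> l | TC l \<Rightarrow> l | TD l \<Rightarrow> l | TE l \<Rightarrow> l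
     | TF4 \<Rightarrow> 4 | TG2 \<Rightarrow> 2)"

definition Sset :: "cartan_type \<Rightarrow> nat set" where
  "Sset t = {1..rank t}"

text \<open>d_i = (alpha_i, alpha_i)/2.\<close>
definition dsym :: "cartan_type \<Rightarrow> nat \<Rightarrow> rat" where
  "dsym t i = (case t of
       TB l \<Rightarrow> (if i = l then 1/2 else 1)
     | TC l \<Rightarrow> (if i = l then 2 else 1)
     | TF4 \<Rightarrow> (if i \<in> {3,4} then 1/2 else 1)
     | TG2 \<Rightarrow> (if i = 2 then 3 else 1)
     | _ \<Rightarrow> 1)"

definition dmin :: "cartan_type \<Rightarrow> rat" where
  "dmin t = Min (dsym t ` Sset t)"

definition dynkin_edge :: "cartan_type \<Rightarrow> nat \<Rightarrow> nat \<Rightarrow> bool" where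
  "dynkin_edge t i j = (i \<in> Sset t \<and> j \<in> Sset t \<and> (case t of
       TD l \<Rightarrow> (j = i + 1 \<and> j \<le> l - 1) \<or> (i = l - 2 \<and> j = l)
     | TE l \<Rightarrow> (i = 1 \<and> j = 2) \<or> (i = 2 \<and> j = 3) \<or> (i = 3 \<and> j = 5) \<or> (i = 3 \<and> j = 4)
               \<or> (5 \<le> i \<and> j = i + 1)
     | _ \<Rightarrow> j = i + 1))"

definition adjacent :: "cartan_type \<Rightarrow> nat \<Rightarrow> nat \<Rightarrow> bool" where
  "adjacent t i j = (dynkin_edge t i j \<or> dynkin_edge t j i)"

text \<open>Cartan matrix C_ij = 2(alpha_i,alpha_j)/(alpha_i,alpha_i), and B_ij = d_i C_ij.\<close>
definition cartanC :: "cartan_type \<Rightarrow> nat \<Rightarrow> nat \<Rightarrow> rat" where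
  "cartanC t i j = (if i = j then 2
     else if adjacent t i j then - (max (dsym t i) (dsym t j) / dsym t i) else 0)"

definition Bsym :: "cartan_type \<Rightarrow> nat \<Rightarrow> nat \<Rightarrow> rat" where
  "Bsym t i j = dsym t i * cartanC t i j"

definition in_mult :: "rat \<Rightarrow> rat \<Rightarrow> bool" where
  "in_mult x a = (\<exists>k::int. x = of_int k * a)"

text \<open>Vertices v^i_n of Q(g) (and indices of s_i(n)): i in S, n in d Z.\<close>
type_synonym vert = "nat \<times> rat"

definition valid_vert :: "cartan_type \<Rightarrow> vert \<Rightarrow> bool" where
  "valid_vert t v = (fst v \<in> Sset t \<and> in_mult (snd v) (dmin t))"

definition arrows :: "cartan_type \<Rightarrow> vert \<Rightarrow> vert \<Rightarrow> int" where
  "arrows t u v = (if valid_vert t u \<and> valid_vert t v then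
     (let i = fst u; n = snd u; j = fst v; m = snd v in
      case t of
        TB l \<Rightarrow>
          of_bool (i = j \<and> i \<le> l - 1 \<and> m = n + 1)
        + of_bool (2 \<le> i \<and> i \<le> l - 1 \<and> j = i - 1 \<and> m = n)
        + of_bool (2 \<le> j \<and> j \<le> l - 1 \<and> i = j - 1 \<and> n = m + 1)
        + of_bool (i = l \<and> j = l \<and> m = n + 1/2)
        + of_bool (i = l \<and> j = l - 1 \<and> m = n - 1/2)
        + of_bool (i = l - 1 \<and> j = l \<and> n = m + 1/2)
      | TC l \<Rightarrow>
          of_bool (i = j \<and> i \<le> l - 1 \<and> m = n + 1)
        + of_bool (2 \<le> i \<and> i \<le> l - 1 \<and> j = i - 1 \<and> m = n)
        + of_bool (2 \<le> j \<and> j \<le> l - 1 \<and> i = j - 1 \<and> n = m + 1)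
        + of_bool (i = l \<and> j = l \<and> m = n + 2)
        + of_bool (i = l \<and> j = l - 1 \<and> m = n)
        + of_bool (i = l - 1 \<and> j = l \<and> n = m + 2)
      | TF4 \<Rightarrow>
          of_bool (i = j \<and> i \<in> {1,2} \<and> m = n + 1)
        + of_bool (i = 2 \<and> j = 1 \<and> m = n)
        + of_bool (i = 1 \<and> j = 2 \<and> n = m + 1)
        + of_bool (i = 3 \<and> j = 3 \<and> m = n + 1/2)
        + of_bool (i = 3 \<and> j = 2 \<and> m = n - 1/2)
        + of_bool (i = 2 \<and> j = 3 \<and> n = m + 1/2)
        + of_bool (i = 4 \<and> j = 4 \<and> m = n + 1/2)
        + of_bool (i = 4 \<and> j = 3 \<and> m = n)
        + of_bool (i = 3 \<and> j = 4 \<and> n = m + 1/2)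
      | TG2 \<Rightarrow>
          of_bool (i = 1 \<and> j = 1 \<and> m = n + 1)
        + of_bool (i = 2 \<and> j = 2 \<and> m = n + 3)
        + of_bool (i = 2 \<and> j = 1 \<and> m = n)
        + of_bool (i = 1 \<and> j = 2 \<and> n = m + 3)
      | _ \<Rightarrow>
          of_bool (i = j \<and> m = n + 1)
        + of_bool (adjacent t i j \<and> j < i \<and> m = n)
        + of_bool (adjacent t i j \<and> i < j \<and> n = m + 1))
   else 0)"

definition exch :: "cartan_type \<Rightarrow> vert \<Rightarrow> vert \<Rightarrow> int" where
  "exch t u v = arrows t u v - arrows t v u"

definition s_omega_lt :: "cartan_type \<Rightarrow> vert \<Rightarrow> vert \<Rightarrow> rat" where
  "s_omega_lt t u v = (let i = fst u; n = snd u; j = fst v; n' = snd v in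
     if i = j then (if in_mult (n' - n) (dsym t i) then 1 else 0)
     else if Bsym t i j \<noteq> 0 \<and> in_mult (n' - n) (min (dsym t i) (dsym t j)) then -1/2 else 0)"

definition s_omega :: "cartan_type \<Rightarrow> vert \<Rightarrow> vert \<Rightarrow> rat" where
  "s_omega t u v = (if valid_vert t u \<and> valid_vert t v then
     (let i = fst u; n = snd u; j = fst v; n' = snd v in
      if n < n' then s_omega_lt t u v
      else if n' < n then - s_omega_lt t v u
      else if i < j \<and> Bsym t i j \<noteq> 0 then -1/2
      else if j < i \<and> Bsym t j i \<noteq> 0 then 1/2
      else 0)
   else 0)"

type_synonym mpoly = "(vert \<Rightarrow>\<^sub>0 nat) \<Rightarrow>\<^sub>0 complex"
type_synonym ratfun = "mpoly fract"

definition mvar :: "vert \<Rightarrow> mpoly" where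
  "mvar v = Poly_Mapping.single (Poly_Mapping.single v 1) 1"

definition mconst :: "complex \<Rightarrow> mpoly" where
  "mconst c = Poly_Mapping.single 0 c"

definition pvars :: "mpoly \<Rightarrow> vert set" where
  "pvars p = (\<Union>m\<in>Poly_Mapping.keys p. Poly_Mapping.keys m)"

definition mpderiv :: "vert \<Rightarrow> mpoly \<Rightarrow> mpoly" where
  "mpderiv v p = (\<Sum>m\<in>Poly_Mapping.keys p.
      Poly_Mapping.single (m - Poly_Mapping.single v 1)
        (Poly_Mapping.lookup p m * of_nat (Poly_Mapping.lookup m v)))"

definition rvar :: "vert \<Rightarrow> ratfun" where
  "rvar v = Fract (mvar v) 1"

definition rconst :: "complex \<Rightarrow> ratfun" where
  "rconst c = Fract (mconst c) 1"

text \<open>Partial derivative of a rational function (quotient rule; independent of the representative).\<close>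
definition rpderiv :: "vert \<Rightarrow> ratfun \<Rightarrow> ratfun" where
  "rpderiv v f = (SOME r. \<exists>a b. b \<noteq> 0 \<and> f = Fract a b \<and>
      r = Fract (mpderiv v a * b - a * mpderiv v b) (b * b))"

definition ratfun_in :: "vert set \<Rightarrow> ratfun \<Rightarrow> bool" where
  "ratfun_in V f = (\<exists>a b. b \<noteq> 0 \<and> f = Fract a b \<and> pvars a \<subseteq> V \<and> pvars b \<subseteq> V)"

text \<open>Log-canonical Poisson bracket with coefficient matrix omega:
  {f,g} = sum_{u,v} omega(u,v) x_u x_v (d f/d x_u) (d g/d x_v),
  the sum taken over a finite set of variables containing all variables of f and g
  (the result does not depend on that choice).\<close>
definition logcan_bracket :: "(vert \<Rightarrow> vert \<Rightarrow> complex) \<Rightarrow> ratfun \<Rightarrow> ratfun \<Rightarrow> ratfun" where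
  "logcan_bracket \<omega> f g = (SOME r. \<exists>V. finite V \<and> ratfun_in V f \<and> ratfun_in V g \<and>
      r = (\<Sum>u\<in>V. \<Sum>v\<in>V. rconst (\<omega> u v) * rvar u * rvar v * rpderiv u f * rpderiv v g))"

definition X_bracket :: "cartan_type \<Rightarrow> ratfun \<Rightarrow> ratfun \<Rightarrow> ratfun" where
  "X_bracket t = logcan_bracket (\<lambda>u v. of_int (exch t u v))"

definition s_bracket :: "cartan_type \<Rightarrow> ratfun \<Rightarrow> ratfun \<Rightarrow> ratfun" where
  "s_bracket t = logcan_bracket (\<lambda>u v. of_rat (s_omega t u v))"

definition sigma_gen :: "cartan_type \<Rightarrow> vert \<Rightarrow> ratfun" where
  "sigma_gen t v = rvar v / rvar (fst v, snd v + dsym t (fst v))"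

definition sigma_poly :: "cartan_type \<Rightarrow> mpoly \<Rightarrow> ratfun" where
  "sigma_poly t p = (\<Sum>m\<in>Poly_Mapping.keys p. rconst (Poly_Mapping.lookup p m) *
      (\<Prod>v\<in>Poly_Mapping.keys m. sigma_gen t v ^ Poly_Mapping.lookup m v))"

definition sigma :: "cartan_type \<Rightarrow> ratfun \<Rightarrow> ratfun" where
  "sigma t f = (SOME r. \<exists>a b. b \<noteq> 0 \<and> f = Fract a b \<and> r = sigma_poly t a / sigma_poly t b)"

end

theory Submission
  imports Defs
begin

lemma pm_expand: "(p::'a \<Rightarrow>\<^sub>0 'b::comm_monoid_add) = (\<Sum>m\<in>Poly_Mapping.keys p. Poly_Mapping.single m (Poly_Mapping.lookup p m))"
proof (rule poly_mapping_eqI)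
  fix k
  show "Poly_Mapping.lookup p k = Poly_Mapping.lookup (\<Sum>m\<in>Poly_Mapping.keys p. Poly_Mapping.single m (Poly_Mapping.lookup p m)) k"
    by (auto simp add: lookup_sum lookup_single when_def in_keys_iff)
qed

lemma pm_expand_sup:
  assumes "finite A" "Poly_Mapping.keys p \<subseteq> A"
  shows "(p::'a \<Rightarrow>\<^sub>0 'b::comm_monoid_add) = (\<Sum>m\<in>A. Poly_Mapping.single m (Poly_Mapping.lookup p m))"
proof -
  have "(\<Sum>m\<in>A. Poly_Mapping.single m (Poly_Mapping.lookup p m)) = (\<Sum>m\<in>Poly_Mapping.keys p. Poly_Mapping.single m (Poly_Mapping.lookup p m))"
    using assms by (intro sum.mono_neutral_right) (auto simp: in_keys_iff)
  then show ?thesis using pm_expand[of p] by simp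
qed

lemma mult_expand:
  fixes p q :: mpoly
  shows "p * q = (\<Sum>a\<in>Poly_Mapping.keys p. \<Sum>b\<in>Poly_Mapping.keys q.
      Poly_Mapping.single (a + b) (Poly_Mapping.lookup p a * Poly_Mapping.lookup q b))"
proof -
  have "p * q = (\<Sum>a\<in>Poly_Mapping.keys p. Poly_Mapping.single a (Poly_Mapping.lookup p a)) *
     (\<Sum>b\<in>Poly_Mapping.keys q. Poly_Mapping.single b (Poly_Mapping.lookup q b))"
    using pm_expand[of p] pm_expand[of q] by simp
  also have "\<dots> = (\<Sum>a\<in>Poly_Mapping.keys p. \<Sum>b\<in>Poly_Mapping.keys q.
      Poly_Mapping.single (a + b) (Poly_Mapping.lookup p a * Poly_Mapping.lookup q b))"
    by (simp add: sum_product mult_single)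
  finally show ?thesis .
qed

lemma additive_sum:
  assumes "h 0 = 0" "\<And>x y. h (x + y) = h x + h y"
  shows "h (sum g A) = (\<Sum>a\<in>A. h (g a))"
  using sum_comp_morphism[of h g A, OF assms] by (simp add: comp_def)

lemma mpderiv_sup:
  assumes "finite A" "Poly_Mapping.keys p \<subseteq> A"
  shows "mpderiv v p = (\<Sum>m\<in>A. Poly_Mapping.single (m - Poly_Mapping.single v 1)
        (Poly_Mapping.lookup p m * of_nat (Poly_Mapping.lookup m v)))"
  unfolding mpderiv_def using assms
  by (intro sum.mono_neutral_left) (auto simp: in_keys_iff)

lemma mpderiv_0[simp]: "mpderiv v 0 = 0"
  by (simp add: mpderiv_def)

lemma mpderiv_add: "mpderiv v (p + q) = mpderiv v p + mpderiv v q"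
proof -
  let ?A = "Poly_Mapping.keys p \<union> Poly_Mapping.keys q"
  have f: "finite ?A" by simp
  have "mpderiv v (p + q) = (\<Sum>m\<in>?A. Poly_Mapping.single (m - Poly_Mapping.single v 1)
        (Poly_Mapping.lookup (p+q) m * of_nat (Poly_Mapping.lookup m v)))"
    using keys_add[of p q] by (intro mpderiv_sup f) auto
  also have "\<dots> = (\<Sum>m\<in>?A. Poly_Mapping.single (m - Poly_Mapping.single v 1)
        (Poly_Mapping.lookup p m * of_nat (Poly_Mapping.lookup m v))) +
     (\<Sum>m\<in>?A. Poly_Mapping.single (m - Poly_Mapping.single v 1)
        (Poly_Mapping.lookup q m * of_nat (Poly_Mapping.lookup m v)))"
    by (simp add: lookup_add distrib_right single_add sum.distrib)
  also have "\<dots> = mpderiv v p + mpderiv v q"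
    by (subst (1 2) mpderiv_sup[OF f]) auto
  finally show ?thesis .
qed

lemma mpderiv_sum: "mpderiv v (sum g A) = (\<Sum>a\<in>A. mpderiv v (g a))"
  by (rule additive_sum) (auto simp: mpderiv_add)

lemma mpderiv_single: "mpderiv v (Poly_Mapping.single m c) =
   Poly_Mapping.single (m - Poly_Mapping.single v 1) (c * of_nat (Poly_Mapping.lookup m v))"
  by (subst mpderiv_sup[of "{m}"]) auto

lemma mpderiv_single_mult:
  "mpderiv v (Poly_Mapping.single a c * Poly_Mapping.single b d) =
   mpderiv v (Poly_Mapping.single a c) * Poly_Mapping.single b d +
   Poly_Mapping.single a c * mpderiv v (Poly_Mapping.single b d)"
proof -
  let ?e = "Poly_Mapping.single v (1::nat)"
  have 1: "Poly_Mapping.single (a + b - ?e) (c * d * of_nat (Poly_Mapping.lookup a v)) =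
        Poly_Mapping.single (a - ?e + b) (c * of_nat (Poly_Mapping.lookup a v) * d)"
  proof (cases "Poly_Mapping.lookup a v = 0")
    case False
    then have "a + b - ?e = a - ?e + b"
      by (intro poly_mapping_eqI) (auto simp: lookup_add lookup_minus lookup_single when_def)
    then show ?thesis by (simp add: ac_simps)
  qed simp
  have 2: "Poly_Mapping.single (a + b - ?e) (c * d * of_nat (Poly_Mapping.lookup b v)) =
        Poly_Mapping.single (a + (b - ?e)) (c * (d * of_nat (Poly_Mapping.lookup b v)))"
  proof (cases "Poly_Mapping.lookup b v = 0")
    case False
    then have "a + b - ?e = a + (b - ?e)"
      by (intro poly_mapping_eqI) (auto simp: lookup_add lookup_minus lookup_single when_def)
    then show ?thesis by (simp add: ac_simps)
  qed simp
  have "mpderiv v (Poly_Mapping.single a c * Poly_Mapping.single b d) =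
     Poly_Mapping.single (a + b - ?e) (c * d * of_nat (Poly_Mapping.lookup a v)) +
     Poly_Mapping.single (a + b - ?e) (c * d * of_nat (Poly_Mapping.lookup b v))"
    by (simp add: mult_single mpderiv_single lookup_add distrib_left single_add)
  also have "\<dots> = mpderiv v (Poly_Mapping.single a c) * Poly_Mapping.single b d +
   Poly_Mapping.single a c * mpderiv v (Poly_Mapping.single b d)"
    by (simp only: 1 2 mpderiv_single mult_single)
  finally show ?thesis .
qed

lemma mpderiv_mult: "mpderiv v (p * q) = mpderiv v p * q + p * mpderiv v q"
proof -
  have "mpderiv v (p * q) = (\<Sum>a\<in>Poly_Mapping.keys p. \<Sum>b\<in>Poly_Mapping.keys q.
      mpderiv v (Poly_Mapping.single a (Poly_Mapping.lookup p a) * Poly_Mapping.single b (Poly_Mapping.lookup q b)))"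
    by (simp only: mult_expand[of p q] mpderiv_sum mult_single)
  also have "\<dots> = (\<Sum>a\<in>Poly_Mapping.keys p. \<Sum>b\<in>Poly_Mapping.keys q.
      mpderiv v (Poly_Mapping.single a (Poly_Mapping.lookup p a)) * Poly_Mapping.single b (Poly_Mapping.lookup q b)) +
      (\<Sum>a\<in>Poly_Mapping.keys p. \<Sum>b\<in>Poly_Mapping.keys q.
      Poly_Mapping.single a (Poly_Mapping.lookup p a) * mpderiv v (Poly_Mapping.single b (Poly_Mapping.lookup q b)))"
    by (simp add: mpderiv_single_mult sum.distrib)
  also have "\<dots> = mpderiv v p * q + p * mpderiv v q"
  proof -
    have ep: "mpderiv v p = (\<Sum>a\<in>Poly_Mapping.keys p. mpderiv v (Poly_Mapping.single a (Poly_Mapping.lookup p a)))"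
      by (subst pm_expand[of p]) (simp only: mpderiv_sum)
    have eq: "mpderiv v q = (\<Sum>a\<in>Poly_Mapping.keys q. mpderiv v (Poly_Mapping.single a (Poly_Mapping.lookup q a)))"
      by (subst pm_expand[of q]) (simp only: mpderiv_sum)
    have p: "p = (\<Sum>a\<in>Poly_Mapping.keys p. (Poly_Mapping.single a (Poly_Mapping.lookup p a)))"
      by (rule pm_expand)
    have q: "q = (\<Sum>a\<in>Poly_Mapping.keys q. (Poly_Mapping.single a (Poly_Mapping.lookup q a)))"
      by (rule pm_expand)
    show ?thesis
      unfolding ep eq by (simp only: sum_product[symmetric] p[symmetric] q[symmetric])
  qed
  finally show ?thesis .
qed

lemma mpderiv_minus: "mpderiv v (- p) = - mpderiv v p"
  using mpderiv_add[of v p "-p"] by (metis add.right_inverse neg_eq_iff_add_eq_0 mpderiv_0)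

lemma mpderiv_diff: "mpderiv v (p - q) = mpderiv v p - mpderiv v q"
  using mpderiv_add[of v p "-q"] by (simp add: mpderiv_minus)

lemma mpderiv_const0: "mpderiv v (Poly_Mapping.single 0 c) = 0"
  by (simp add: mpderiv_single)

lemma mpderiv_1[simp]: "mpderiv v 1 = 0"
  using mpderiv_const0[of v 1] by simp

lemma mpderiv_mvar: "mpderiv w (mvar v) = (if w = v then 1 else 0)"
  by (auto simp: mvar_def mpderiv_single lookup_single)

lemma mpderiv_mconst: "mpderiv w (mconst c) = 0"
  by (simp add: mconst_def mpderiv_const0)

lemma ring_id_add: "((A * d + a * D + (C * b + c * B)) * (b * d) - (a * d + c * b) * (B * d + b * D)) *
      (b * b * (d * d)) =
      ((A * b - a * B) * (d * d) + (C * d - c * D) * (b * b)) *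
      (b * d * (b * d))" for a b c d A B C D :: "'a::comm_ring_1"
  by (simp add: algebra_simps)

lemma ring_id_mult: "((A * c + a * C) * (b * d) - a * c * (B * d + b * D)) * (b * b * d * (b * (d * d))) =
       ((A * b - a * B) * c * (b * (d * d)) + a * (C * d - c * D) * (b * b * d)) *
       (b * d * (b * d))" for a b c d A B C D :: "'a::comm_ring_1"
  by (simp add: algebra_simps)

lemma ring_id_wd: "(A * b - a * B) * (d * d) - (C * d - c * D) * (b * b)
      = (d * b) * ((A * d + a * D) - (C * b + c * B))
        + (c * b - a * d) * (B * d + D * b)" for a b c d A B C D :: "'a::comm_ring_1"
  by (simp add: algebra_simps)

lemma rpderiv_wd:
  fixes a b c d :: mpoly
  assumes "b \<noteq> 0" "d \<noteq> 0" "Fract a b = Fract c d"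
  shows "Fract (mpderiv v a * b - a * mpderiv v b) (b * b) = Fract (mpderiv v c * d - c * mpderiv v d) (d * d)"
proof -
  have h1: "a * d = c * b" using assms by (simp add: eq_fract)
  have h2: "mpderiv v a * d + a * mpderiv v d = mpderiv v c * b + c * mpderiv v b"
    using arg_cong[OF h1, of "mpderiv v"] by (simp add: mpderiv_mult)
  have "(mpderiv v a * b - a * mpderiv v b) * (d * d) = (mpderiv v c * d - c * mpderiv v d) * (b * b)"
  proof -
    have "(mpderiv v a * b - a * mpderiv v b) * (d * d) - (mpderiv v c * d - c * mpderiv v d) * (b * b)
      = (d * b) * ((mpderiv v a * d + a * mpderiv v d) - (mpderiv v c * b + c * mpderiv v b))
        + (c * b - a * d) * (mpderiv v b * d + mpderiv v d * b)"
      by (rule ring_id_wd)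
    also have "\<dots> = 0" by (simp only: h1 h2 diff_self mult_zero_right mult_zero_left add_0)
    finally show ?thesis by (simp only: right_minus_eq)
  qed
  moreover have "b * b \<noteq> 0" "d * d \<noteq> 0" using assms by auto
  ultimately show ?thesis using eq_fract(1) by metis
qed

lemma rpderiv_Fract:
  assumes "b \<noteq> 0"
  shows "rpderiv v (Fract a b) = Fract (mpderiv v a * b - a * mpderiv v b) (b * b)"
proof -
  let ?P = "\<lambda>r. \<exists>a' b'. b' \<noteq> 0 \<and> Fract a b = Fract a' b' \<and>
      r = Fract (mpderiv v a' * b' - a' * mpderiv v b') (b' * b')"
  have "?P (Fract (mpderiv v a * b - a * mpderiv v b) (b * b))"
    by (rule exI[of _ a], rule exI[of _ b]) (intro conjI assms refl)
  then have "?P (SOME r. ?P r)" by (rule someI)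
  then obtain a' b' where h0: "b' \<noteq> 0 \<and> Fract a b = Fract a' b' \<and>
     (SOME r. ?P r) = Fract (mpderiv v a' * b' - a' * mpderiv v b') (b' * b')" by (elim exE) (rule that)
  note h = conjunct1[OF h0] conjunct1[OF conjunct2[OF h0]] conjunct2[OF conjunct2[OF h0]]
  have "rpderiv v (Fract a b) = (SOME r. ?P r)" unfolding rpderiv_def by (rule refl)
  also have "\<dots> = Fract (mpderiv v a' * b' - a' * mpderiv v b') (b' * b')" by (rule h(3))
  also have "\<dots> = Fract (mpderiv v a * b - a * mpderiv v b) (b * b)"
    by (rule rpderiv_wd[OF assms h(1) h(2), symmetric])
  finally show ?thesis .
qed

lemma rpderiv_Fract1: "rpderiv v (Fract a 1) = Fract (mpderiv v a) 1"
  by (simp add: rpderiv_Fract)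

lemma rpderiv_add: "rpderiv v (x + y) = rpderiv v x + rpderiv v y"
proof (cases x)
  case (Fract a b)
  show ?thesis
  proof (cases y)
    case (Fract c d)
    have nz: "b * d \<noteq> 0" "b * d * (b * d) \<noteq> 0" "b * b \<noteq> 0" "d * d \<noteq> 0" "b * b * (d * d) \<noteq> 0"
      using \<open>b \<noteq> 0\<close> \<open>d \<noteq> 0\<close> by auto
    have e1: "rpderiv v (x + y) = Fract (mpderiv v (a * d + c * b) * (b * d) - (a * d + c * b) * mpderiv v (b * d)) (b * d * (b * d))"
      by (simp only: \<open>x = Fract a b\<close> \<open>y = Fract c d\<close> add_fract[OF \<open>b \<noteq> 0\<close> \<open>d \<noteq> 0\<close>] rpderiv_Fract[OF nz(1)])
    have e2: "rpderiv v x + rpderiv v y = Fract ((mpderiv v a * b - a * mpderiv v b) * (d * d) + (mpderiv v c * d - c * mpderiv v d) * (b * b)) (b * b * (d * d))"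
      by (simp only: \<open>x = Fract a b\<close> \<open>y = Fract c d\<close> rpderiv_Fract[OF \<open>b \<noteq> 0\<close>] rpderiv_Fract[OF \<open>d \<noteq> 0\<close>] add_fract[OF nz(3) nz(4)])
    have "(mpderiv v (a * d + c * b) * (b * d) - (a * d + c * b) * mpderiv v (b * d)) *
      (b * b * (d * d)) =
      ((mpderiv v a * b - a * mpderiv v b) * (d * d) + (mpderiv v c * d - c * mpderiv v d) * (b * b)) *
      (b * d * (b * d))"
      by (simp only: mpderiv_mult mpderiv_add ring_id_add)
    then show ?thesis unfolding e1 e2 using eq_fract(1)[OF nz(2) nz(5)] by blast
  qed
qed

lemma rpderiv_mult: "rpderiv v (x * y) = rpderiv v x * y + x * rpderiv v y"
proof (cases x)
  case (Fract a b)
  show ?thesis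
  proof (cases y)
    case (Fract c d)
    have nz: "b * d \<noteq> 0" "b * d * (b * d) \<noteq> 0" "b * b * d \<noteq> 0" "b * (d * d) \<noteq> 0" "b * b * d * (b * (d * d)) \<noteq> 0"
      using \<open>b \<noteq> 0\<close> \<open>d \<noteq> 0\<close> by auto
    have e1: "rpderiv v (x * y) = Fract (mpderiv v (a * c) * (b * d) - a * c * mpderiv v (b * d)) (b * d * (b * d))"
      by (simp only: \<open>x = Fract a b\<close> \<open>y = Fract c d\<close> mult_fract rpderiv_Fract[OF nz(1)])
    have e2: "rpderiv v x * y + x * rpderiv v y = Fract ((mpderiv v a * b - a * mpderiv v b) * c * (b * (d * d)) + a * (mpderiv v c * d - c * mpderiv v d) * (b * b * d)) (b * b * d * (b * (d * d)))"
      by (simp only: \<open>x = Fract a b\<close> \<open>y = Fract c d\<close> rpderiv_Fract[OF \<open>b \<noteq> 0\<close>] rpderiv_Fract[OF \<open>d \<noteq> 0\<close>] mult_fract add_fract[OF nz(3) nz(4)])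
    have "(mpderiv v (a * c) * (b * d) - a * c * mpderiv v (b * d)) * (b * b * d * (b * (d * d))) =
       ((mpderiv v a * b - a * mpderiv v b) * c * (b * (d * d)) + a * (mpderiv v c * d - c * mpderiv v d) * (b * b * d)) *
       (b * d * (b * d))"
      by (simp only: mpderiv_mult mpderiv_add ring_id_mult)
    then show ?thesis unfolding e1 e2 using eq_fract(1)[OF nz(2) nz(5)] by blast
  qed
qed

lemma rpderiv_0[simp]: "rpderiv v 0 = 0"
  using rpderiv_Fract1[of v 0] by (simp add: fract_collapse)

lemma rpderiv_1[simp]: "rpderiv v 1 = 0"
  using rpderiv_Fract1[of v 1] by (simp add: fract_collapse)

lemma rpderiv_minus: "rpderiv v (- x) = - rpderiv v x"
  using rpderiv_add[of v x "-x"] by (metis add.right_inverse neg_eq_iff_add_eq_0 rpderiv_0)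

lemma rpderiv_diff: "rpderiv v (x - y) = rpderiv v x - rpderiv v y"
  using rpderiv_add[of v x "-y"] by (simp add: rpderiv_minus)

lemma rpderiv_sum: "rpderiv v (sum g A) = (\<Sum>a\<in>A. rpderiv v (g a))"
  by (rule additive_sum) (auto simp: rpderiv_add)

lemma rpderiv_prod: "rpderiv v (prod g A) = (\<Sum>a\<in>A. rpderiv v (g a) * prod g (A - {a}))"
proof (induction A rule: infinite_finite_induct)
  case (insert x F)
  have "rpderiv v (prod g (insert x F)) = rpderiv v (g x) * prod g F + g x * rpderiv v (prod g F)"
    using insert by (simp add: rpderiv_mult)
  also have "\<dots> = rpderiv v (g x) * prod g F + (\<Sum>a\<in>F. rpderiv v (g a) * (g x * prod g (F - {a})))"
    using insert by (simp add: sum_distrib_left ac_simps)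
  also have "\<dots> = (\<Sum>a\<in>insert x F. rpderiv v (g a) * prod g (insert x F - {a}))"
  proof -
    have "(\<Sum>a\<in>F. rpderiv v (g a) * (g x * prod g (F - {a}))) = (\<Sum>a\<in>F. rpderiv v (g a) * prod g (insert x F - {a}))"
    proof (rule sum.cong)
      fix a assume "a \<in> F"
      then have "insert x F - {a} = insert x (F - {a})" using insert by auto
      then show "rpderiv v (g a) * (g x * prod g (F - {a})) = rpderiv v (g a) * prod g (insert x F - {a})"
        using insert by simp
    qed simp
    then show ?thesis using insert by (simp add: insert_Diff_if)
  qed
  finally show ?case .
qed auto

lemma rpderiv_power: "rpderiv v (x ^ n) = of_nat n * x ^ (n - 1) * rpderiv v x"
proof (induction n)
  case (Suc n)
  then show ?case by (cases n) (simp_all add: rpderiv_mult algebra_simps)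
qed simp

lemma rpderiv_inverse: "rpderiv v (inverse x) = - rpderiv v x / (x * x)"
proof (cases "x = 0")
  case False
  have "0 = rpderiv v (x * inverse x)" using False by simp
  also have "\<dots> = rpderiv v x * inverse x + x * rpderiv v (inverse x)" by (rule rpderiv_mult)
  finally have e: "x * rpderiv v (inverse x) = - (rpderiv v x * inverse x)"
    by (metis add.commute add_eq_0_iff)
  have "rpderiv v (inverse x) = inverse x * (x * rpderiv v (inverse x))"
    using False by (simp add: mult.assoc[symmetric])
  also have "\<dots> = - rpderiv v x / (x * x)"
    unfolding e by (simp add: divide_inverse inverse_mult_distrib mult_ac)
  finally show ?thesis .
qed simp

lemma rpderiv_divide: "rpderiv v (x / y) = (rpderiv v x * y - x * rpderiv v y) / (y * y)"
proof (cases "y = 0")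
  case False
  have "rpderiv v (x / y) = rpderiv v x * inverse y + x * (- rpderiv v y / (y * y))"
    by (simp add: divide_inverse rpderiv_mult rpderiv_inverse)
  also have "\<dots> = (rpderiv v x * y - x * rpderiv v y) / (y * y)"
    using False by (simp add: divide_inverse inverse_mult_distrib algebra_simps)
  finally show ?thesis .
qed simp

lemma rpderiv_rvar: "rpderiv w (rvar v) = (if w = v then 1 else 0)"
  by (simp add: rvar_def rpderiv_Fract1 mpderiv_mvar fract_collapse)

lemma rpderiv_rconst: "rpderiv w (rconst c) = 0"
  by (simp add: rconst_def rpderiv_Fract1 mpderiv_mconst fract_collapse)

lemma keys_add_sub: "Poly_Mapping.keys (p + q) \<subseteq> Poly_Mapping.keys p \<union> Poly_Mapping.keys q"
  by (rule keys_add)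

lemma keys_plus_nat: "Poly_Mapping.keys ((a::vert \<Rightarrow>\<^sub>0 nat) + b) = Poly_Mapping.keys a \<union> Poly_Mapping.keys b"
  by (auto simp: in_keys_iff lookup_add)

lemma pvars_add: "pvars (p + q) \<subseteq> pvars p \<union> pvars q"
  unfolding pvars_def using keys_add[of p q] by blast

lemma pvars_mult: "pvars (p * q) \<subseteq> pvars p \<union> pvars q"
  unfolding pvars_def using keys_mult[of p q] by (force simp: keys_plus_nat)

lemma pvars_minus: "pvars (- p) = pvars p"
  unfolding pvars_def by simp

lemma pvars_diff: "pvars (p - q) \<subseteq> pvars p \<union> pvars q"
  using pvars_add[of p "-q"] by (simp add: pvars_minus)

lemma pvars_single: "pvars (Poly_Mapping.single m c) \<subseteq> Poly_Mapping.keys m"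
  unfolding pvars_def by auto

lemma pvars_0[simp]: "pvars 0 = {}"
  unfolding pvars_def by simp

lemma pvars_1[simp]: "pvars 1 = {}"
  unfolding pvars_def by simp

lemma pvars_mvar: "pvars (mvar v) = {v}"
  unfolding pvars_def mvar_def by simp

lemma pvars_mconst: "pvars (mconst c) = {}"
  unfolding pvars_def mconst_def by (auto)

lemma pvars_sum: "pvars (sum g A) \<subseteq> (\<Union>a\<in>A. pvars (g a))"
proof (induction A rule: infinite_finite_induct)
  case (insert x F)
  then show ?case using pvars_add[of "g x" "sum g F"] by auto
qed auto

lemma pvars_prod: "pvars (prod g A) \<subseteq> (\<Union>a\<in>A. pvars (g a))"
proof (induction A rule: infinite_finite_induct)
  case (insert x F)
  then show ?case using pvars_mult[of "g x" "prod g F"] by auto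
qed auto

lemma mpderiv_nonvar:
  assumes "u \<notin> pvars p"
  shows "mpderiv u p = 0"
  unfolding mpderiv_def
proof (rule sum.neutral, intro ballI)
  fix m assume "m \<in> Poly_Mapping.keys p"
  then have "u \<notin> Poly_Mapping.keys m" using assms unfolding pvars_def by blast
  then show "Poly_Mapping.single (m - Poly_Mapping.single u 1) (Poly_Mapping.lookup p m * of_nat (Poly_Mapping.lookup m u)) = 0"
    by (simp add: in_keys_iff)
qed

lemma rpderiv_out:
  assumes "ratfun_in V f" "u \<notin> V"
  shows "rpderiv u f = 0"
proof -
  obtain a b where h: "b \<noteq> 0" "f = Fract a b" "pvars a \<subseteq> V" "pvars b \<subseteq> V"
    using assms(1) unfolding ratfun_in_def by blast
  have "mpderiv u a = 0" "mpderiv u b = 0" using h assms(2) by (auto intro!: mpderiv_nonvar)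
  then show ?thesis using h by (simp add: rpderiv_Fract fract_collapse)
qed

lemma ratfun_inI: "b \<noteq> 0 \<Longrightarrow> pvars a \<subseteq> V \<Longrightarrow> pvars b \<subseteq> V \<Longrightarrow> ratfun_in V (Fract a b)"
  unfolding ratfun_in_def by blast

lemma ratfun_in_mono: "ratfun_in V f \<Longrightarrow> V \<subseteq> W \<Longrightarrow> ratfun_in W f"
  unfolding ratfun_in_def by blast

lemma ratfun_in_Fract1: "pvars a \<subseteq> V \<Longrightarrow> ratfun_in V (Fract a 1)"
  by (rule ratfun_inI) auto

lemma ratfun_in_0: "ratfun_in V 0"
  using ratfun_in_Fract1[of 0 V] by (simp add: fract_collapse)

lemma ratfun_in_1: "ratfun_in V 1"
  using ratfun_in_Fract1[of 1 V] by (simp add: fract_collapse)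

lemma ratfun_in_rvar: "v \<in> V \<Longrightarrow> ratfun_in V (rvar v)"
  unfolding rvar_def by (rule ratfun_in_Fract1) (simp add: pvars_mvar)

lemma ratfun_in_rconst: "ratfun_in V (rconst c)"
  unfolding rconst_def by (rule ratfun_in_Fract1) (simp add: pvars_mconst)

lemma ratfun_in_add:
  assumes "ratfun_in V f" "ratfun_in V g"
  shows "ratfun_in V (f + g)"
proof -
  obtain a b where h: "b \<noteq> 0" "f = Fract a b" "pvars a \<subseteq> V" "pvars b \<subseteq> V"
    using assms(1) unfolding ratfun_in_def by blast
  obtain c d where k: "d \<noteq> 0" "g = Fract c d" "pvars c \<subseteq> V" "pvars d \<subseteq> V"
    using assms(2) unfolding ratfun_in_def by blast
  have "f + g = Fract (a * d + c * b) (b * d)" using h k by simp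
  moreover have "pvars (a * d + c * b) \<subseteq> V"
    using h k pvars_add[of "a * d" "c * b"] pvars_mult[of a d] pvars_mult[of c b] by blast
  moreover have "pvars (b * d) \<subseteq> V" "b * d \<noteq> 0"
    using h k pvars_mult[of b d] by auto
  ultimately show ?thesis by (simp add: ratfun_inI)
qed

lemma ratfun_in_mult:
  assumes "ratfun_in V f" "ratfun_in V g"
  shows "ratfun_in V (f * g)"
proof -
  obtain a b where h: "b \<noteq> 0" "f = Fract a b" "pvars a \<subseteq> V" "pvars b \<subseteq> V"
    using assms(1) unfolding ratfun_in_def by blast
  obtain c d where k: "d \<noteq> 0" "g = Fract c d" "pvars c \<subseteq> V" "pvars d \<subseteq> V"
    using assms(2) unfolding ratfun_in_def by blast
  have "f * g = Fract (a * c) (b * d)" using h k by simp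
  moreover have "pvars (a * c) \<subseteq> V" "pvars (b * d) \<subseteq> V" "b * d \<noteq> 0"
    using h k pvars_mult[of a c] pvars_mult[of b d] by auto
  ultimately show ?thesis by (simp add: ratfun_inI)
qed

lemma ratfun_in_inverse:
  assumes "ratfun_in V f"
  shows "ratfun_in V (inverse f)"
proof -
  obtain a b where h: "b \<noteq> 0" "f = Fract a b" "pvars a \<subseteq> V" "pvars b \<subseteq> V"
    using assms(1) unfolding ratfun_in_def by blast
  show ?thesis
  proof (cases "a = 0")
    case True
    then show ?thesis using h ratfun_in_0 by (simp add: fract_collapse)
  next
    case False
    then show ?thesis using h by (simp add: ratfun_inI)
  qed
qed

lemma ratfun_in_divide: "ratfun_in V f \<Longrightarrow> ratfun_in V g \<Longrightarrow> ratfun_in V (f / g)"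
  by (simp add: divide_inverse ratfun_in_mult ratfun_in_inverse)

lemma ratfun_in_minus: "ratfun_in V f \<Longrightarrow> ratfun_in V (- f)"
proof -
  have "rconst (-1) = -1" unfolding rconst_def mconst_def
    by (metis One_fract_def minus_fract single_one single_uminus)
  then show "ratfun_in V f \<Longrightarrow> ratfun_in V (- f)"
    using ratfun_in_mult[OF ratfun_in_rconst[of V "-1"], of f] by simp
qed

lemma ratfun_in_diff: "ratfun_in V f \<Longrightarrow> ratfun_in V g \<Longrightarrow> ratfun_in V (f - g)"
  using ratfun_in_add[of V f "-g"] ratfun_in_minus by simp

lemma ratfun_in_sum: "(\<And>a. a \<in> A \<Longrightarrow> ratfun_in V (g a)) \<Longrightarrow> ratfun_in V (sum g A)"
  by (induction A rule: infinite_finite_induct) (auto simp: ratfun_in_0 ratfun_in_add)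

lemma ratfun_in_prod: "(\<And>a. a \<in> A \<Longrightarrow> ratfun_in V (g a)) \<Longrightarrow> ratfun_in V (prod g A)"
  by (induction A rule: infinite_finite_induct) (auto simp: ratfun_in_1 ratfun_in_mult)

lemma ratfun_in_power: "ratfun_in V f \<Longrightarrow> ratfun_in V (f ^ n)"
  by (induction n) (auto simp: ratfun_in_1 ratfun_in_mult)

definition lsum :: "(vert \<Rightarrow> vert \<Rightarrow> complex) \<Rightarrow> vert set \<Rightarrow> ratfun \<Rightarrow> ratfun \<Rightarrow> ratfun" where
  "lsum \<omega> V f g = (\<Sum>u\<in>V. \<Sum>v\<in>V. rconst (\<omega> u v) * rvar u * rvar v * rpderiv u f * rpderiv v g)"

lemma lsum_sup:
  assumes "finite U" "V \<subseteq> U" "ratfun_in V f" "ratfun_in V g"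
  shows "lsum \<omega> U f g = lsum \<omega> V f g"
proof -
  have fV: "finite V" using assms finite_subset by blast
  have "lsum \<omega> U f g = (\<Sum>u\<in>U. \<Sum>v\<in>V. rconst (\<omega> u v) * rvar u * rvar v * rpderiv u f * rpderiv v g)"
    unfolding lsum_def
  proof (rule sum.cong[OF refl])
    fix u assume "u \<in> U"
    show "(\<Sum>v\<in>U. rconst (\<omega> u v) * rvar u * rvar v * rpderiv u f * rpderiv v g) =
          (\<Sum>v\<in>V. rconst (\<omega> u v) * rvar u * rvar v * rpderiv u f * rpderiv v g)"
      by (rule sum.mono_neutral_right[OF assms(1) assms(2)]) (auto simp: rpderiv_out[OF assms(4)])
  qed
  also have "\<dots> = lsum \<omega> V f g"
    unfolding lsum_def
    by (rule sum.mono_neutral_right[OF assms(1) assms(2)]) (auto simp: rpderiv_out[OF assms(3)])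
  finally show ?thesis .
qed

lemma logcan_eq:
  assumes "finite V" "ratfun_in V f" "ratfun_in V g"
  shows "logcan_bracket \<omega> f g = lsum \<omega> V f g"
proof -
  let ?P = "\<lambda>r. \<exists>V. finite V \<and> ratfun_in V f \<and> ratfun_in V g \<and> r = lsum \<omega> V f g"
  have "?P (lsum \<omega> V f g)" using assms by blast
  then have "?P (SOME r. ?P r)" by (rule someI)
  then obtain W where W: "finite W" "ratfun_in W f" "ratfun_in W g" "(SOME r. ?P r) = lsum \<omega> W f g"
    by blast
  have "logcan_bracket \<omega> f g = (SOME r. ?P r)" unfolding logcan_bracket_def lsum_def by (rule refl)
  also have "\<dots> = lsum \<omega> W f g" by (rule W(4))
  also have "\<dots> = lsum \<omega> (V \<union> W) f g" using W assms by (intro lsum_sup[symmetric]) auto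
  also have "\<dots> = lsum \<omega> V f g" using assms W by (intro lsum_sup) auto
  finally show ?thesis .
qed

lemma dsym_pos: "dsym t i > 0"
  by (cases t) (auto simp: dsym_def)

definition vplus :: "cartan_type \<Rightarrow> vert \<Rightarrow> vert" where
  "vplus t v = (fst v, snd v + dsym t (fst v))"

lemma sigma_gen_vplus: "sigma_gen t v = rvar v / rvar (vplus t v)"
  by (simp add: sigma_gen_def vplus_def)

lemma vplus_snd: "snd (vplus t v) > snd v"
  using dsym_pos[of t "fst v"] by (simp add: vplus_def)

lemma vplus_neq: "vplus t v \<noteq> v"
  using vplus_snd[of v t] by auto

lemma vplus_inj: "vplus t v = vplus t w \<Longrightarrow> v = w"
  by (cases v; cases w) (auto simp: vplus_def)

lemma rconst_add: "rconst (a + b) = rconst a + rconst b"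
  by (simp add: rconst_def mconst_def single_add)

lemma rconst_mult: "rconst (a * b) = rconst a * rconst b"
  by (simp add: rconst_def mconst_def mult_single)

lemma rconst_0[simp]: "rconst 0 = 0"
  by (simp add: rconst_def mconst_def fract_collapse)

lemma rconst_1[simp]: "rconst 1 = 1"
  by (simp add: rconst_def mconst_def fract_collapse)

lemma rconst_sum: "rconst (sum g A) = (\<Sum>a\<in>A. rconst (g a))"
  by (rule additive_sum) (auto simp: rconst_add)

lemma rconst_minus: "rconst (- a) = - rconst a"
  by (simp add: rconst_def mconst_def single_uminus)

lemma rconst_diff: "rconst (a - b) = rconst a - rconst b"
  using rconst_add[of a "-b"] by (simp add: rconst_minus)

lemma mvar_power: "mvar v ^ k = Poly_Mapping.single (Poly_Mapping.single v k) 1"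
  by (induction k) (simp_all add: mvar_def mult_single single_add[symmetric] add.commute)

lemma rvar_power: "rvar v ^ k = Fract (Poly_Mapping.single (Poly_Mapping.single v k) 1) 1"
  by (induction k) (simp_all add: rvar_def mvar_power[symmetric] fract_collapse)

lemma single_nz: "c \<noteq> 0 \<Longrightarrow> Poly_Mapping.single k c \<noteq> 0"
  by (metis lookup_single_eq lookup_zero)

lemma mvar_nz: "mvar v \<noteq> 0"
  by (simp add: mvar_def single_nz)

lemma rvar_nz: "rvar v \<noteq> 0"
  using mvar_nz[of v] by (simp add: rvar_def Zero_fract_def eq_fract del: fract_collapse)

definition smono :: "cartan_type \<Rightarrow> (vert \<Rightarrow>\<^sub>0 nat) \<Rightarrow> ratfun" where
  "smono t m = (\<Prod>v\<in>Poly_Mapping.keys m. sigma_gen t v ^ Poly_Mapping.lookup m v)"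

lemma mono_sup:
  assumes "finite A" "Poly_Mapping.keys m \<subseteq> A"
  shows "smono t m = (\<Prod>v\<in>A. sigma_gen t v ^ Poly_Mapping.lookup m v)"
  unfolding smono_def using assms
  by (intro prod.mono_neutral_left) (auto simp: in_keys_iff)

lemma mono_0[simp]: "smono t 0 = 1"
  by (simp add: smono_def)

lemma mono_add: "smono t (m1 + m2) = smono t m1 * smono t m2"
proof -
  let ?A = "Poly_Mapping.keys m1 \<union> Poly_Mapping.keys m2"
  have "smono t (m1 + m2) = (\<Prod>v\<in>?A. sigma_gen t v ^ Poly_Mapping.lookup (m1 + m2) v)"
    by (rule mono_sup) (auto simp: keys_plus_nat)
  also have "\<dots> = (\<Prod>v\<in>?A. sigma_gen t v ^ Poly_Mapping.lookup m1 v) * (\<Prod>v\<in>?A. sigma_gen t v ^ Poly_Mapping.lookup m2 v)"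
    by (simp add: lookup_add power_add prod.distrib)
  also have "\<dots> = smono t m1 * smono t m2"
    by (subst (1 2) mono_sup[of ?A]) auto
  finally show ?thesis .
qed

lemma sigma_poly_def': "sigma_poly t p = (\<Sum>m\<in>Poly_Mapping.keys p. rconst (Poly_Mapping.lookup p m) * smono t m)"
  by (simp add: sigma_poly_def smono_def)

lemma sp_sup:
  assumes "finite A" "Poly_Mapping.keys p \<subseteq> A"
  shows "sigma_poly t p = (\<Sum>m\<in>A. rconst (Poly_Mapping.lookup p m) * smono t m)"
  unfolding sigma_poly_def' using assms
  by (intro sum.mono_neutral_left) (auto simp: in_keys_iff)

lemma sp_0[simp]: "sigma_poly t 0 = 0"
  by (simp add: sigma_poly_def)

lemma sp_add: "sigma_poly t (p + q) = sigma_poly t p + sigma_poly t q"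
proof -
  let ?A = "Poly_Mapping.keys p \<union> Poly_Mapping.keys q"
  have "sigma_poly t (p + q) = (\<Sum>m\<in>?A. rconst (Poly_Mapping.lookup (p + q) m) * smono t m)"
    using keys_add[of p q] by (intro sp_sup) auto
  also have "\<dots> = (\<Sum>m\<in>?A. rconst (Poly_Mapping.lookup p m) * smono t m) + (\<Sum>m\<in>?A. rconst (Poly_Mapping.lookup q m) * smono t m)"
    by (simp add: lookup_add rconst_add distrib_right sum.distrib)
  also have "\<dots> = sigma_poly t p + sigma_poly t q"
    by (subst (1 2) sp_sup[of ?A]) auto
  finally show ?thesis .
qed

lemma sp_sum: "sigma_poly t (sum g A) = (\<Sum>a\<in>A. sigma_poly t (g a))"
  by (rule additive_sum) (auto simp: sp_add)

lemma sp_single: "sigma_poly t (Poly_Mapping.single m c) = rconst c * smono t m"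
  by (subst sp_sup[of "{m}"]) auto

lemma sp_mult: "sigma_poly t (p * q) = sigma_poly t p * sigma_poly t q"
proof -
  have "sigma_poly t (p * q) = (\<Sum>a\<in>Poly_Mapping.keys p. \<Sum>b\<in>Poly_Mapping.keys q.
      (rconst (Poly_Mapping.lookup p a) * smono t a) * (rconst (Poly_Mapping.lookup q b) * smono t b))"
    by (simp only: mult_expand[of p q] sp_sum sp_single rconst_mult mono_add mult_ac)
  also have "\<dots> = sigma_poly t p * sigma_poly t q"
    by (simp only: sigma_poly_def' sum_product)
  finally show ?thesis .
qed

lemma sp_1[simp]: "sigma_poly t 1 = 1"
  using sp_single[of t 0 1] by simp

lemma sp_minus: "sigma_poly t (- p) = - sigma_poly t p"
  using sp_add[of t p "-p"] by (metis add.right_inverse neg_eq_iff_add_eq_0 sp_0)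

lemma sp_diff: "sigma_poly t (p - q) = sigma_poly t p - sigma_poly t q"
  using sp_add[of t p "-q"] by (simp add: sp_minus)

lemma sp_mvar: "sigma_poly t (mvar v) = sigma_gen t v"
  by (simp add: mvar_def sp_single smono_def)

lemma sp_mconst: "sigma_poly t (mconst c) = rconst c"
  by (simp add: mconst_def sp_single)

definition LTi :: "(nat \<Rightarrow> int) \<Rightarrow> (nat \<Rightarrow> nat \<Rightarrow> bool) \<Rightarrow> nat \<Rightarrow> nat \<Rightarrow> int \<Rightarrow> rat" where
  "LTi r adj i j k = (if i = j then (if r i dvd k then 1 else 0)
     else if adj i j \<and> min (r i) (r j) dvd k then -1/2 else 0)"

definition SWi :: "(nat \<Rightarrow> int) \<Rightarrow> (nat \<Rightarrow> nat \<Rightarrow> bool) \<Rightarrow> nat \<Rightarrow> nat \<Rightarrow> int \<Rightarrow> rat" where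
  "SWi r adj i j k = (if 0 < k then LTi r adj i j k else if k < 0 then - LTi r adj j i (-k)
     else if i < j \<and> adj i j then -1/2 else if j < i \<and> adj j i then 1/2 else 0)"

definition Ci :: "(nat \<Rightarrow> int) \<Rightarrow> (nat \<Rightarrow> nat \<Rightarrow> bool) \<Rightarrow> nat \<Rightarrow> nat \<Rightarrow> int \<Rightarrow> rat" where
  "Ci r adj i j k = SWi r adj i j k - SWi r adj i j (k + r j) - SWi r adj i j (k - r i) + SWi r adj i j (k + r j - r i)"

lemma adjacent_sym: "adjacent t i j = adjacent t j i"
  by (auto simp: adjacent_def)

lemma Bsym_nz: "i \<noteq> j \<Longrightarrow> (Bsym t i j \<noteq> 0) = adjacent t i j"
proof -
  assume "i \<noteq> j"
  have "dsym t i > 0" "dsym t j > 0" by (rule dsym_pos)+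
  then have "max (dsym t i) (dsym t j) > 0" by simp
  then show ?thesis using \<open>i \<noteq> j\<close> \<open>dsym t i > 0\<close>
    by (auto simp: Bsym_def cartanC_def)
qed

lemma in_mult_int: "(q::rat) \<noteq> 0 \<Longrightarrow> in_mult (of_int k * q) (of_int r * q) = (r dvd k)"
  unfolding in_mult_def dvd_def
proof -
  assume q: "q \<noteq> 0"
  have "\<And>z. (of_int k * q = of_int z * (of_int r * q)) = (k = r * z)"
  proof -
    fix z
    have "(of_int k * q = of_int z * (of_int r * q)) = (of_int k * q = (of_int (r * z) :: rat) * q)"
      by (simp add: mult_ac)
    also have "\<dots> = (k = r * z)" using q by (metis mult_cancel_right of_int_eq_iff)
    finally show "(of_int k * q = of_int z * (of_int r * q)) = (k = r * z)" .
  qed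
  then show "(\<exists>z. of_int k * q = of_int z * (of_int r * q)) = (\<exists>z. k = r * z)" by simp
qed

locale cdata =
  fixes t :: cartan_type and r :: "nat \<Rightarrow> int"
  assumes dm_pos: "dmin t > 0"
    and r_def: "\<And>i. i \<in> Sset t \<Longrightarrow> dsym t i = of_int (r i) * dmin t"
    and r_pos: "\<And>i. i \<in> Sset t \<Longrightarrow> r i > 0"
begin

lemma valid_iff: "valid_vert t (i, n) = (i \<in> Sset t \<and> (\<exists>a. n = of_int a * dmin t))"
  by (auto simp: valid_vert_def in_mult_def)

lemma s_omega_red:
  assumes vu: "valid_vert t (i, n)" and vv: "valid_vert t (j, m)" and k: "m - n = of_int k * dmin t"
  shows "s_omega t (i, n) (j, m) = SWi r (adjacent t) i j k"
proof -
  have iS: "i \<in> Sset t" and jS: "j \<in> Sset t" using vu vv by (auto simp: valid_vert_def)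
  have dm: "dmin t > 0" by (rule dm_pos)
  have lt1: "(n < m) = (0 < k)"
  proof -
    have "(n < m) = (0 < m - n)" by simp
    also have "\<dots> = (0 < of_int k * dmin t)" using k by simp
    also have "\<dots> = (0 < k)" using dm by (simp add: zero_less_mult_iff)
    finally show ?thesis .
  qed
  have lt2: "(m < n) = (k < 0)"
  proof -
    have "(m < n) = (m - n < 0)" by simp
    also have "\<dots> = (of_int k * dmin t < 0)" using k by simp
    also have "\<dots> = (k < 0)" using dm by (simp add: mult_less_0_iff)
    finally show ?thesis .
  qed
  have k2: "n - m = of_int (-k) * dmin t" using k by (simp add: algebra_simps)
  have d1: "in_mult (m - n) (dsym t i) = (r i dvd k)"
    unfolding k r_def[OF iS] using dm by (simp add: in_mult_int)
  have d2: "in_mult (n - m) (dsym t j) = (r j dvd -k)"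
    using in_mult_int[of "dmin t" "-k" "r j"] dm unfolding k2 r_def[OF jS] by simp
  have mn: "min (dsym t i) (dsym t j) = of_int (min (r i) (r j)) * dmin t"
    unfolding r_def[OF iS] r_def[OF jS] using dm by (simp add: min_def)
  have mn2: "min (dsym t j) (dsym t i) = of_int (min (r j) (r i)) * dmin t"
    unfolding r_def[OF iS] r_def[OF jS] using dm by (simp add: min_def)
  have d3: "in_mult (m - n) (min (dsym t i) (dsym t j)) = (min (r i) (r j) dvd k)"
    unfolding k mn using dm by (simp add: in_mult_int)
  have d4: "in_mult (n - m) (min (dsym t j) (dsym t i)) = (min (r j) (r i) dvd -k)"
    using in_mult_int[of "dmin t" "-k" "min (r j) (r i)"] dm unfolding k2 mn2 by simp
  show ?thesis
  proof (cases "i = j")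
    case True
    then show ?thesis using vu vv lt1 lt2 d1 d2
      by (simp add: s_omega_def s_omega_lt_def SWi_def LTi_def Let_def)
  next
    case False
    then show ?thesis using vu vv lt1 lt2 d3 d4 Bsym_nz[of i j t] Bsym_nz[of j i t]
      by (simp add: s_omega_def s_omega_lt_def SWi_def LTi_def Let_def adjacent_sym)
  qed
qed

lemma valid_vplus: "valid_vert t u \<Longrightarrow> valid_vert t (vplus t u)"
proof -
  assume "valid_vert t u"
  then obtain i n a where u: "u = (i, n)" "i \<in> Sset t" "n = of_int a * dmin t"
    by (cases u) (auto simp: valid_iff)
  have "snd (vplus t u) = of_int (a + r i) * dmin t"
    using u r_def[OF u(2)] by (simp add: vplus_def algebra_simps)
  then show ?thesis using u unfolding valid_vert_def in_mult_def
    by (auto intro!: exI[of _ "a + r i"] simp: vplus_def)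
qed

lemma comb_generic:
  fixes AR :: "nat \<Rightarrow> nat \<Rightarrow> int \<Rightarrow> int"
  assumes H: "\<And>i j k n. valid_vert t (i, n) \<Longrightarrow> valid_vert t (j, n + of_int k * dmin t) \<Longrightarrow>
       arrows t (i, n) (j, n + of_int k * dmin t) = AR i j k"
    and ID: "\<And>i j k. i \<in> Sset t \<Longrightarrow> j \<in> Sset t \<Longrightarrow> Ci r (adjacent t) i j k = of_int (AR i j k - AR j i (-k))"
    and vu: "valid_vert t u" and vv: "valid_vert t v"
  shows "s_omega t u v - s_omega t u (vplus t v) - s_omega t (vplus t u) v + s_omega t (vplus t u) (vplus t v) =
    of_int (exch t u v)"
proof -
  obtain i n a where u: "u = (i, n)" "i \<in> Sset t" "n = of_int a * dmin t"
    using vu by (cases u) (auto simp: valid_iff)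
  obtain j m b where v: "v = (j, m)" "j \<in> Sset t" "m = of_int b * dmin t"
    using vv by (cases v) (auto simp: valid_iff)
  define k where "k = b - a"
  have mk: "m = n + of_int k * dmin t" using u v by (simp add: k_def algebra_simps)
  have vup: "valid_vert t (vplus t u)" and vvp: "valid_vert t (vplus t v)" using vu vv valid_vplus by auto
  have up: "vplus t (i, n) = (i, n + dsym t i)" and vp: "vplus t (j, m) = (j, m + dsym t j)"
    by (simp_all add: vplus_def)
  have s1: "s_omega t u v = SWi r (adjacent t) i j k"
    using vu vv unfolding u(1) v(1) by (rule s_omega_red) (simp add: mk)
  have s2: "s_omega t u (vplus t v) = SWi r (adjacent t) i j (k + r j)"
    using vu vvp unfolding u(1) v(1) vp by (rule s_omega_red) (simp add: mk r_def[OF v(2)] algebra_simps)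
  have s3: "s_omega t (vplus t u) v = SWi r (adjacent t) i j (k - r i)"
    using vup vv unfolding u(1) v(1) up by (rule s_omega_red) (simp add: mk r_def[OF u(2)] algebra_simps)
  have s4: "s_omega t (vplus t u) (vplus t v) = SWi r (adjacent t) i j (k + r j - r i)"
    using vup vvp unfolding u(1) v(1) up vp
    by (rule s_omega_red) (simp add: mk r_def[OF u(2)] r_def[OF v(2)] algebra_simps)
  have a1: "arrows t u v = AR i j k"
    using H vu vv unfolding u(1) v(1) mk by blast
  have nm: "n = m + of_int (-k) * dmin t" using mk by simp
  have a2: "arrows t v u = AR j i (-k)"
    using H[of j m i "-k"] vu vv unfolding u(1) v(1) nm by simp
  show ?thesis
    unfolding s1 s2 s3 s4 exch_def a1 a2 using ID[OF u(2) v(2), of k] by (simp add: Ci_def)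
qed

end

lemma dvd_add_iff_r: "(m::int) dvd a \<Longrightarrow> (m dvd (k + a)) = (m dvd k)"
  by (simp add: dvd_add_left_iff)

lemma dvd_diff_iff_r: "(m::int) dvd a \<Longrightarrow> (m dvd (k - a)) = (m dvd k)"
  by (metis diff_add_cancel dvd_add_left_iff dvd_diff)

lemma dvd_rdiff_iff: "(m::int) dvd a \<Longrightarrow> (m dvd (a - x)) = (m dvd x)"
  by (metis dvd_diff_iff_r dvd_minus_iff minus_diff_eq)

lemma LT_shift:
  assumes "min (r i) (r j) dvd c"
  shows "LTi r adj i j (x + c) = LTi r adj i j x"
proof (cases "i = j")
  case True
  then show ?thesis using assms by (simp add: LTi_def dvd_add_iff_r)
next
  case False
  then show ?thesis using assms by (simp add: LTi_def dvd_add_iff_r)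
qed

lemma Ci_large:
  assumes "min (r i) (r j) dvd r i" "min (r i) (r j) dvd r j" "r i > 0" "r j > 0" "k > r i \<or> k < - r j"
  shows "Ci r adj i j k = 0"
proof -
  have m1: "min (r j) (r i) dvd r i" "min (r j) (r i) dvd r j" using assms(1,2) by (simp_all add: min.commute)
  have d1: "min (r i) (r j) dvd (r j)" "min (r i) (r j) dvd (- r i)" "min (r i) (r j) dvd (r j - r i)"
    using assms(1,2) by auto
  have d2: "min (r j) (r i) dvd (- r j)" "min (r j) (r i) dvd (r i)" "min (r j) (r i) dvd (r i - r j)"
    using m1 by auto
  from assms(5) show ?thesis
  proof
    assume k: "k > r i"
    have "Ci r adj i j k = LTi r adj i j k - LTi r adj i j (k + r j) - LTi r adj i j (k + - r i) + LTi r adj i j (k + (r j - r i))"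
      using k assms(3,4) by (simp add: Ci_def SWi_def algebra_simps)
    also have "\<dots> = 0" by (simp only: LT_shift[OF d1(1)] LT_shift[OF d1(2)] LT_shift[OF d1(3)])
    finally show ?thesis .
  next
    assume k: "k < - r j"
    have "Ci r adj i j k = - LTi r adj j i (- k) + LTi r adj j i (- k + - r j) + LTi r adj j i (- k + r i) - LTi r adj j i (- k + (r i - r j))"
      using k assms(3,4) by (simp add: Ci_def SWi_def algebra_simps)
    also have "\<dots> = 0" by (simp only: LT_shift[OF d2(1)] LT_shift[OF d2(2)] LT_shift[OF d2(3)])
    finally show ?thesis .
  qed
qed

definition LTb :: "bool \<Rightarrow> bool \<Rightarrow> int \<Rightarrow> int \<Rightarrow> int \<Rightarrow> rat" where
  "LTb e ad ri rj k = (if e then (if ri dvd k then 1 else 0)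
     else if ad \<and> min ri rj dvd k then -1/2 else 0)"

definition SWb :: "bool \<Rightarrow> bool \<Rightarrow> bool \<Rightarrow> bool \<Rightarrow> int \<Rightarrow> int \<Rightarrow> int \<Rightarrow> rat" where
  "SWb e ad lt gt ri rj k = (if 0 < k then LTb e ad ri rj k else if k < 0 then - LTb e ad rj ri (-k)
     else if lt \<and> ad then -1/2 else if gt \<and> ad then 1/2 else 0)"

definition Cb :: "bool \<Rightarrow> bool \<Rightarrow> bool \<Rightarrow> bool \<Rightarrow> int \<Rightarrow> int \<Rightarrow> int \<Rightarrow> rat" where
  "Cb e ad lt gt ri rj k = SWb e ad lt gt ri rj k - SWb e ad lt gt ri rj (k + rj)
     - SWb e ad lt gt ri rj (k - ri) + SWb e ad lt gt ri rj (k + rj - ri)"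

lemma Ci_b:
  assumes "adj j i = adj i j"
  shows "Ci r adj i j k = Cb (i = j) (adj i j) (i < j) (j < i) (r i) (r j) k"
proof -
  have "SWi r adj i j x = SWb (i = j) (adj i j) (i < j) (j < i) (r i) (r j) x" for x
    using assms by (auto simp: SWi_def SWb_def LTi_def LTb_def)
  then show ?thesis by (simp add: Ci_def Cb_def)
qed

lemma LTb_shift:
  assumes "min ri rj dvd c" "e \<Longrightarrow> ri = rj"
  shows "LTb e ad ri rj (x + c) = LTb e ad ri rj x"
proof (cases e)
  case True
  then show ?thesis using assms by (simp add: LTb_def dvd_add_iff_r)
next
  case False
  then show ?thesis using assms by (simp add: LTb_def dvd_add_iff_r)
qed

lemma Cb_large:
  assumes "min ri rj dvd ri" "min ri rj dvd rj" "ri > 0" "rj > 0" "e \<Longrightarrow> ri = rj" "k > ri \<or> k < - rj"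
  shows "Cb e ad lt gt ri rj k = 0"
proof -
  have m1: "min rj ri dvd ri" "min rj ri dvd rj" using assms(1,2) by (simp_all add: min.commute)
  have d1: "min ri rj dvd rj" "min ri rj dvd (- ri)" "min ri rj dvd (rj - ri)"
    using assms(1,2) by auto
  have d2: "min rj ri dvd (- rj)" "min rj ri dvd ri" "min rj ri dvd (ri - rj)"
    using m1 by auto
  have e2: "e \<Longrightarrow> rj = ri" using assms(5) by simp
  from assms(6) show ?thesis
  proof
    assume k: "k > ri"
    have "Cb e ad lt gt ri rj k = LTb e ad ri rj k - LTb e ad ri rj (k + rj) - LTb e ad ri rj (k + - ri) + LTb e ad ri rj (k + (rj - ri))"
      using k assms(3,4) by (simp add: Cb_def SWb_def algebra_simps)
    also have "\<dots> = 0"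
      by (simp only: LTb_shift[OF d1(1) assms(5)] LTb_shift[OF d1(2) assms(5)] LTb_shift[OF d1(3) assms(5)])
    finally show ?thesis .
  next
    assume k: "k < - rj"
    have "Cb e ad lt gt ri rj k = - LTb e ad rj ri (- k) + LTb e ad rj ri (- k + - rj) + LTb e ad rj ri (- k + ri) - LTb e ad rj ri (- k + (ri - rj))"
      using k assms(3,4) by (simp add: Cb_def SWb_def algebra_simps)
    also have "\<dots> = 0"
      by (simp only: LTb_shift[OF d2(1) e2] LTb_shift[OF d2(2) e2] LTb_shift[OF d2(3) e2])
    finally show ?thesis .
  qed
qed

definition ARBb :: "bool \<Rightarrow> bool \<Rightarrow> bool \<Rightarrow> bool \<Rightarrow> bool \<Rightarrow> int \<Rightarrow> int" where
  "ARBb e p q a b k = of_bool (e \<and> \<not> a \<and> k = 2) + of_bool (q \<and> \<not> a \<and> k = 0) + of_bool (p \<and> \<not> b \<and> k = -2)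
     + of_bool (a \<and> b \<and> k = 1) + of_bool (a \<and> q \<and> k = -1) + of_bool (b \<and> p \<and> k = -1)"

lemma Cb_far: "Cb False False lt gt ri rj k = 0"
  by (simp add: Cb_def SWb_def LTb_def)

lemma B_bool:
  assumes "\<not> (e \<and> p)" "\<not> (e \<and> q)" "\<not> (p \<and> q)" "e \<Longrightarrow> a = b" "p \<Longrightarrow> \<not> a" "q \<Longrightarrow> \<not> b" "a \<and> b \<Longrightarrow> e"
    "p \<Longrightarrow> lt \<and> \<not> gt" "q \<Longrightarrow> gt \<and> \<not> lt" "e \<Longrightarrow> \<not> lt \<and> \<not> gt"
  shows "Cb e (p \<or> q) lt gt (if a then 1 else 2) (if b then 1 else 2) k = of_int (ARBb e p q a b k - ARBb e q p b a (-k))"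
proof -
  let ?ri = "if a then 1 else 2::int" and ?rj = "if b then 1 else 2::int"
  show ?thesis
  proof (cases "e \<or> p \<or> q")
    case False
    then show ?thesis using assms(7) by (auto simp: Cb_far ARBb_def)
  next
    case True
    consider "k > ?ri \<or> k < - ?rj" | "k = -2" | "k = -1" | "k = 0" | "k = 1" | "k = 2"
      by (cases a; cases b) (auto, arith+)
    then show ?thesis
    proof cases
      case 1
      have "Cb e (p \<or> q) lt gt ?ri ?rj k = 0"
        by (rule Cb_large) (use 1 assms(4) in \<open>auto\<close>)
      moreover have "ARBb e p q a b k = 0" "ARBb e q p b a (-k) = 0" using 1 by (auto simp: ARBb_def split: if_splits)
      ultimately show ?thesis by simp
    next
      case 2
      then show ?thesis using True assms
        by (cases e; cases p; cases q; cases a; cases b; simp_all; simp add: Cb_def SWb_def LTb_def ARBb_def)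
    next
      case 3
      then show ?thesis using True assms
        by (cases e; cases p; cases q; cases a; cases b; simp_all; simp add: Cb_def SWb_def LTb_def ARBb_def)
    next
      case 4
      then show ?thesis using True assms
        by (cases e; cases p; cases q; cases a; cases b; simp_all; simp add: Cb_def SWb_def LTb_def ARBb_def)
    next
      case 5
      then show ?thesis using True assms
        by (cases e; cases p; cases q; cases a; cases b; simp_all; simp add: Cb_def SWb_def LTb_def ARBb_def)
    next
      case 6
      then show ?thesis using True assms
        by (cases e; cases p; cases q; cases a; cases b; simp_all; simp add: Cb_def SWb_def LTb_def ARBb_def)
    qed
  qed
qed

lemma dmin_B: "l \<ge> 2 \<Longrightarrow> dmin (TB l) = 1/2"
  unfolding dmin_def Sset_def rank_def
  by (rule Min_eqI) (auto simp: dsym_def image_iff intro: bexI[of _ l])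

lemma adjacent_B: "adjacent (TB l) i j = (i \<in> {1..l} \<and> j \<in> {1..l} \<and> (j = i + 1 \<or> i = j + 1))"
  by (auto simp: adjacent_def dynkin_edge_def Sset_def rank_def)

lemma cdata_B: "l \<ge> 2 \<Longrightarrow> cdata (TB l) (\<lambda>i. if i = l then 1 else 2)"
  by unfold_locales (auto simp: dmin_B dsym_def Sset_def rank_def)

lemma H_B:
  assumes "l \<ge> 2" "valid_vert (TB l) (i, n)" "valid_vert (TB l) (j, n + of_int k * dmin (TB l))"
  shows "arrows (TB l) (i, n) (j, n + of_int k * dmin (TB l)) =
    ARBb (i = j) (j = i + 1) (i = j + 1) (i = l) (j = l) k"
proof -
  have ij: "i \<in> {1..l}" "j \<in> {1..l}" using assms(2,3) by (auto simp: valid_vert_def Sset_def rank_def)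
  let ?x = "of_int k * (1/2) :: rat"
  have c1: "(n + ?x = n + 1) = (k = 2)" "(n + ?x = n) = (k = 0)" "(n = n + ?x + 1) = (k = -2)"
    "(n + ?x = n + 1/2) = (k = 1)" "(n + ?x = n - 1/2) = (k = -1)" "(n = n + ?x + 1/2) = (k = -1)"
    by linarith+
  have c2: "(i = j \<and> i \<le> l - 1 \<and> k = 2) = (i = j \<and> \<not> i = l \<and> k = 2)"
    "(2 \<le> i \<and> i \<le> l - 1 \<and> j = i - 1 \<and> k = 0) = (i = j + 1 \<and> \<not> i = l \<and> k = 0)"
    "(2 \<le> j \<and> j \<le> l - 1 \<and> i = j - 1 \<and> k = -2) = (j = i + 1 \<and> \<not> j = l \<and> k = -2)"
    "(i = l \<and> j = l - 1 \<and> k = -1) = (i = l \<and> i = j + 1 \<and> k = -1)"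
    "(i = l - 1 \<and> j = l \<and> k = -1) = (j = l \<and> j = i + 1 \<and> k = -1)"
    using ij by auto
  have "arrows (TB l) (i, n) (j, n + of_int k * dmin (TB l)) =
       of_bool (i = j \<and> i \<le> l - 1 \<and> k = 2)
        + of_bool (2 \<le> i \<and> i \<le> l - 1 \<and> j = i - 1 \<and> k = 0)
        + of_bool (2 \<le> j \<and> j \<le> l - 1 \<and> i = j - 1 \<and> k = -2)
        + of_bool (i = l \<and> j = l \<and> k = 1)
        + of_bool (i = l \<and> j = l - 1 \<and> k = -1)
        + of_bool (i = l - 1 \<and> j = l \<and> k = -1)"
    unfolding arrows_def Let_def dmin_B[OF assms(1)] using assms(2,3)
    by (simp only: dmin_B[OF assms(1)] c1 if_True conj_assoc prod.sel cartan_type.case simp_thms)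
  also have "\<dots> = ARBb (i = j) (j = i + 1) (i = j + 1) (i = l) (j = l) k"
    unfolding c2 ARBb_def by (simp only: conj_ac)
  finally show ?thesis .
qed

lemma comb_B:
  assumes "l \<ge> 2" "valid_vert (TB l) u" "valid_vert (TB l) v"
  shows "s_omega (TB l) u v - s_omega (TB l) u (vplus (TB l) v) - s_omega (TB l) (vplus (TB l) u) v
     + s_omega (TB l) (vplus (TB l) u) (vplus (TB l) v) = of_int (exch (TB l) u v)"
proof -
  interpret cdata "TB l" "\<lambda>i. if i = l then 1 else 2" by (rule cdata_B[OF assms(1)])
  show ?thesis
  proof (rule comb_generic[where AR = "\<lambda>i j k. ARBb (i = j) (j = i + 1) (i = j + 1) (i = l) (j = l) k"])
    fix i j k n
    assume "valid_vert (TB l) (i, n)" "valid_vert (TB l) (j, n + of_int k * dmin (TB l))"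
    then show "arrows (TB l) (i, n) (j, n + of_int k * dmin (TB l)) = ARBb (i = j) (j = i + 1) (i = j + 1) (i = l) (j = l) k"
      by (rule H_B[OF assms(1)])
  next
    fix i j k
    assume ij: "i \<in> Sset (TB l)" "j \<in> Sset (TB l)"
    have adj: "adjacent (TB l) i j = (j = i + 1 \<or> i = j + 1)" using ij by (simp add: adjacent_B Sset_def rank_def)
    have "Ci (\<lambda>i. if i = l then 1 else 2) (adjacent (TB l)) i j k =
       Cb (i = j) (j = i + 1 \<or> i = j + 1) (i < j) (j < i) (if i = l then 1 else 2) (if j = l then 1 else 2) k"
      unfolding Ci_b[of "adjacent (TB l)", OF adjacent_sym] adj by (rule refl)
    also have "\<dots> = of_int (ARBb (i = j) (j = i + 1) (i = j + 1) (i = l) (j = l) k - ARBb (i = j) (i = j + 1) (j = i + 1) (j = l) (i = l) (-k))"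
      using ij by (intro B_bool) (auto simp: Sset_def rank_def)
    finally show "Ci (\<lambda>i. if i = l then 1 else 2) (adjacent (TB l)) i j k =
       of_int (ARBb (i = j) (j = i + 1) (i = j + 1) (i = l) (j = l) k - ARBb (j = i) (i = j + 1) (j = i + 1) (j = l) (i = l) (-k))"
      by (simp add: eq_commute[of j i])
  qed (use assms in auto)
qed

definition ARCb :: "bool \<Rightarrow> bool \<Rightarrow> bool \<Rightarrow> bool \<Rightarrow> bool \<Rightarrow> int \<Rightarrow> int" where
  "ARCb e p q a b k = of_bool (e \<and> \<not> a \<and> k = 1) + of_bool (q \<and> \<not> a \<and> k = 0) + of_bool (p \<and> \<not> b \<and> k = -1)
     + of_bool (a \<and> b \<and> k = 2) + of_bool (a \<and> q \<and> k = 0) + of_bool (b \<and> p \<and> k = -2)"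

lemma C_bool:
  assumes "\<not> (e \<and> p)" "\<not> (e \<and> q)" "\<not> (p \<and> q)" "e \<Longrightarrow> a = b" "p \<Longrightarrow> \<not> a" "q \<Longrightarrow> \<not> b" "a \<and> b \<Longrightarrow> e"
    "p \<Longrightarrow> lt \<and> \<not> gt" "q \<Longrightarrow> gt \<and> \<not> lt" "e \<Longrightarrow> \<not> lt \<and> \<not> gt"
  shows "Cb e (p \<or> q) lt gt (if a then 2 else 1) (if b then 2 else 1) k = of_int (ARCb e p q a b k - ARCb e q p b a (-k))"
proof -
  let ?ri = "if a then 2 else 1::int" and ?rj = "if b then 2 else 1::int"
  show ?thesis
  proof (cases "e \<or> p \<or> q")
    case False
    then show ?thesis using assms(7) by (auto simp: Cb_far ARCb_def)
  next
    case True
    consider "k > ?ri \<or> k < - ?rj" | "k = -2" | "k = -1" | "k = 0" | "k = 1" | "k = 2"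
      by (cases a; cases b) (auto, arith+)
    then show ?thesis
    proof cases
      case 1
      have "Cb e (p \<or> q) lt gt ?ri ?rj k = 0"
        by (rule Cb_large) (use 1 assms(4) in \<open>auto\<close>)
      moreover have "ARCb e p q a b k = 0" "ARCb e q p b a (-k) = 0" using 1 by (auto simp: ARCb_def split: if_splits)
      ultimately show ?thesis by simp
    next
      case 2
      then show ?thesis using True assms
        by (cases e; cases p; cases q; cases a; cases b; simp_all; simp add: Cb_def SWb_def LTb_def ARCb_def)
    next
      case 3
      then show ?thesis using True assms
        by (cases e; cases p; cases q; cases a; cases b; simp_all; simp add: Cb_def SWb_def LTb_def ARCb_def)
    next
      case 4
      then show ?thesis using True assms
        by (cases e; cases p; cases q; cases a; cases b; simp_all; simp add: Cb_def SWb_def LTb_def ARCb_def)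
    next
      case 5
      then show ?thesis using True assms
        by (cases e; cases p; cases q; cases a; cases b; simp_all; simp add: Cb_def SWb_def LTb_def ARCb_def)
    next
      case 6
      then show ?thesis using True assms
        by (cases e; cases p; cases q; cases a; cases b; simp_all; simp add: Cb_def SWb_def LTb_def ARCb_def)
    qed
  qed
qed

lemma dmin_C: "l \<ge> 2 \<Longrightarrow> dmin (TC l) = 1"
  unfolding dmin_def Sset_def rank_def
  by (rule Min_eqI) (auto simp: dsym_def image_iff intro: bexI[of _ 1])

lemma adjacent_C: "adjacent (TC l) i j = (i \<in> {1..l} \<and> j \<in> {1..l} \<and> (j = i + 1 \<or> i = j + 1))"
  by (auto simp: adjacent_def dynkin_edge_def Sset_def rank_def)

lemma cdata_C: "l \<ge> 2 \<Longrightarrow> cdata (TC l) (\<lambda>i. if i = l then 2 else 1)"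
  by unfold_locales (auto simp: dmin_C dsym_def Sset_def rank_def)

lemma H_C:
  assumes "l \<ge> 2" "valid_vert (TC l) (i, n)" "valid_vert (TC l) (j, n + of_int k * dmin (TC l))"
  shows "arrows (TC l) (i, n) (j, n + of_int k * dmin (TC l)) =
    ARCb (i = j) (j = i + 1) (i = j + 1) (i = l) (j = l) k"
proof -
  have ij: "i \<in> {1..l}" "j \<in> {1..l}" using assms(2,3) by (auto simp: valid_vert_def Sset_def rank_def)
  let ?x = "of_int k * 1 :: rat"
  have c1: "(n + ?x = n + 1) = (k = 1)" "(n + ?x = n) = (k = 0)" "(n = n + ?x + 1) = (k = -1)"
    "(n + ?x = n + 2) = (k = 2)" "(n = n + ?x + 2) = (k = -2)"
    by linarith+
  have c2: "(i = j \<and> i \<le> l - 1 \<and> k = 1) = (i = j \<and> \<not> i = l \<and> k = 1)"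
    "(2 \<le> i \<and> i \<le> l - 1 \<and> j = i - 1 \<and> k = 0) = (i = j + 1 \<and> \<not> i = l \<and> k = 0)"
    "(2 \<le> j \<and> j \<le> l - 1 \<and> i = j - 1 \<and> k = -1) = (j = i + 1 \<and> \<not> j = l \<and> k = -1)"
    "(i = l \<and> j = l - 1 \<and> k = 0) = (i = l \<and> i = j + 1 \<and> k = 0)"
    "(i = l - 1 \<and> j = l \<and> k = -2) = (j = l \<and> j = i + 1 \<and> k = -2)"
    using ij by auto
  have "arrows (TC l) (i, n) (j, n + of_int k * dmin (TC l)) =
       of_bool (i = j \<and> i \<le> l - 1 \<and> k = 1)
        + of_bool (2 \<le> i \<and> i \<le> l - 1 \<and> j = i - 1 \<and> k = 0)
        + of_bool (2 \<le> j \<and> j \<le> l - 1 \<and> i = j - 1 \<and> k = -1)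
        + of_bool (i = l \<and> j = l \<and> k = 2)
        + of_bool (i = l \<and> j = l - 1 \<and> k = 0)
        + of_bool (i = l - 1 \<and> j = l \<and> k = -2)"
    unfolding arrows_def Let_def dmin_C[OF assms(1)] using assms(2,3)
    by (simp only: dmin_C[OF assms(1)] c1 if_True conj_assoc prod.sel cartan_type.case simp_thms)
  also have "\<dots> = ARCb (i = j) (j = i + 1) (i = j + 1) (i = l) (j = l) k"
    unfolding c2 ARCb_def by (simp only: conj_ac)
  finally show ?thesis .
qed

lemma comb_C:
  assumes "l \<ge> 2" "valid_vert (TC l) u" "valid_vert (TC l) v"
  shows "s_omega (TC l) u v - s_omega (TC l) u (vplus (TC l) v) - s_omega (TC l) (vplus (TC l) u) v
     + s_omega (TC l) (vplus (TC l) u) (vplus (TC l) v) = of_int (exch (TC l) u v)"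
proof -
  interpret cdata "TC l" "\<lambda>i. if i = l then 2 else 1" by (rule cdata_C[OF assms(1)])
  show ?thesis
  proof (rule comb_generic[where AR = "\<lambda>i j k. ARCb (i = j) (j = i + 1) (i = j + 1) (i = l) (j = l) k"])
    fix i j k n
    assume "valid_vert (TC l) (i, n)" "valid_vert (TC l) (j, n + of_int k * dmin (TC l))"
    then show "arrows (TC l) (i, n) (j, n + of_int k * dmin (TC l)) = ARCb (i = j) (j = i + 1) (i = j + 1) (i = l) (j = l) k"
      by (rule H_C[OF assms(1)])
  next
    fix i j k
    assume ij: "i \<in> Sset (TC l)" "j \<in> Sset (TC l)"
    have adj: "adjacent (TC l) i j = (j = i + 1 \<or> i = j + 1)" using ij by (simp add: adjacent_C Sset_def rank_def)
    have "Ci (\<lambda>i. if i = l then 2 else 1) (adjacent (TC l)) i j k =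
       Cb (i = j) (j = i + 1 \<or> i = j + 1) (i < j) (j < i) (if i = l then 2 else 1) (if j = l then 2 else 1) k"
      unfolding Ci_b[of "adjacent (TC l)", OF adjacent_sym] adj by (rule refl)
    also have "\<dots> = of_int (ARCb (i = j) (j = i + 1) (i = j + 1) (i = l) (j = l) k - ARCb (i = j) (i = j + 1) (j = i + 1) (j = l) (i = l) (-k))"
      using ij by (intro C_bool) (auto simp: Sset_def rank_def)
    finally show "Ci (\<lambda>i. if i = l then 2 else 1) (adjacent (TC l)) i j k =
       of_int (ARCb (i = j) (j = i + 1) (i = j + 1) (i = l) (j = l) k - ARCb (j = i) (i = j + 1) (j = i + 1) (j = l) (i = l) (-k))"
      by (simp add: eq_commute[of j i])
  qed (use assms in auto)
qed

lemma int_range: "(a::int) \<le> k \<Longrightarrow> k \<le> b \<Longrightarrow> k \<in> set [a..b]"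
  by simp

lemma Cb_enum:
  assumes "min ri rj dvd ri" "min ri rj dvd rj" "ri > 0" "rj > 0" "e \<Longrightarrow> ri = rj"
    and "\<And>k. k > ri \<or> k < - rj \<Longrightarrow> R k = 0"
    and "\<And>k. k \<in> set [- rj..ri] \<Longrightarrow> Cb e ad lt gt ri rj k = R k"
  shows "Cb e ad lt gt ri rj k = R k"
proof (cases "k > ri \<or> k < - rj")
  case True
  then show ?thesis using Cb_large[OF assms(1-5) True] assms(6)[OF True] by simp
next
  case False
  then show ?thesis using assms(7)[OF int_range] by simp
qed

definition ARG :: "nat \<Rightarrow> nat \<Rightarrow> int \<Rightarrow> int" where
  "ARG i j k = of_bool (i = 1 \<and> j = 1 \<and> k = 1) + of_bool (i = 2 \<and> j = 2 \<and> k = 3)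
     + of_bool (i = 2 \<and> j = 1 \<and> k = 0) + of_bool (i = 1 \<and> j = 2 \<and> k = -3)"

lemma dmin_G: "dmin TG2 = 1"
  unfolding dmin_def Sset_def rank_def
  by (rule Min_eqI) (auto simp: dsym_def image_iff intro: bexI[of _ 1])

lemma cdata_G: "cdata TG2 (\<lambda>i. if i = 2 then 3 else 1)"
  by unfold_locales (auto simp: dmin_G dsym_def Sset_def rank_def)

lemma SG: "Sset TG2 = {1, 2}"
  by (auto simp: Sset_def rank_def)

lemma adjacent_G: "adjacent TG2 i j = ((i = 1 \<and> j = 2) \<or> (i = 2 \<and> j = 1))"
  by (auto simp: adjacent_def dynkin_edge_def Sset_def rank_def)

lemma H_G:
  assumes "valid_vert TG2 (i, n)" "valid_vert TG2 (j, n + of_int k * dmin TG2)"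
  shows "arrows TG2 (i, n) (j, n + of_int k * dmin TG2) = ARG i j k"
proof -
  have c1: "(n + of_int k * 1 = n + 1) = (k = 1)" "(n + of_int k * 1 = n + 3) = (k = 3)"
    "(n + of_int k * 1 = n) = (k = 0)" "(n = n + of_int k * 1 + 3) = (k = -3)"
    by linarith+
  show ?thesis
    unfolding arrows_def Let_def ARG_def using assms
    by (simp only: dmin_G c1 if_True conj_assoc prod.sel cartan_type.case simp_thms)
qed

lemma ID_G:
  assumes "i \<in> {1, 2}" "j \<in> {1, 2}"
  shows "Ci (\<lambda>i. if i = 2 then 3 else 1) (adjacent TG2) i j k = of_int (ARG i j k - ARG j i (-k))"
proof -
  have e: "Ci (\<lambda>i. if i = 2 then 3 else 1) (adjacent TG2) i j k =
    Cb (i = j) (adjacent TG2 i j) (i < j) (j < i) (if i = 2 then 3 else 1) (if j = 2 then 3 else 1) k"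
    by (rule Ci_b[OF adjacent_sym])
  from assms consider "i = 1 \<and> j = 1" | "i = 1 \<and> j = 2" | "i = 2 \<and> j = 1" | "i = 2 \<and> j = 2" by auto
  then show ?thesis unfolding e
    by cases (simp add: adjacent_G; rule Cb_enum; auto simp: Cb_def SWb_def LTb_def ARG_def upto.simps)+
qed

lemma comb_G:
  assumes "valid_vert TG2 u" "valid_vert TG2 v"
  shows "s_omega TG2 u v - s_omega TG2 u (vplus TG2 v) - s_omega TG2 (vplus TG2 u) v
     + s_omega TG2 (vplus TG2 u) (vplus TG2 v) = of_int (exch TG2 u v)"
proof -
  interpret cdata TG2 "\<lambda>i. if i = 2 then 3 else 1" by (rule cdata_G)
  show ?thesis
  proof (rule comb_generic[where AR = ARG])
    fix i j k n
    assume "valid_vert TG2 (i, n)" "valid_vert TG2 (j, n + of_int k * dmin TG2)"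
    then show "arrows TG2 (i, n) (j, n + of_int k * dmin TG2) = ARG i j k" by (rule H_G)
  next
    fix i j k
    assume "i \<in> Sset TG2" "j \<in> Sset TG2"
    then show "Ci (\<lambda>i. if i = 2 then 3 else 1) (adjacent TG2) i j k = of_int (ARG i j k - ARG j i (-k))"
      unfolding SG by (rule ID_G)
  qed (use assms in auto)
qed

definition ARF :: "nat \<Rightarrow> nat \<Rightarrow> int \<Rightarrow> int" where
  "ARF i j k = of_bool (i = j \<and> i \<in> {1,2} \<and> k = 2) + of_bool (i = 2 \<and> j = 1 \<and> k = 0)
     + of_bool (i = 1 \<and> j = 2 \<and> k = -2) + of_bool (i = 3 \<and> j = 3 \<and> k = 1)
     + of_bool (i = 3 \<and> j = 2 \<and> k = -1) + of_bool (i = 2 \<and> j = 3 \<and> k = -1)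
     + of_bool (i = 4 \<and> j = 4 \<and> k = 1) + of_bool (i = 4 \<and> j = 3 \<and> k = 0)
     + of_bool (i = 3 \<and> j = 4 \<and> k = -1)"

lemma dmin_F: "dmin TF4 = 1/2"
  unfolding dmin_def Sset_def rank_def
  by (rule Min_eqI) (auto simp: dsym_def image_iff intro: bexI[of _ 3])

lemma cdata_F: "cdata TF4 (\<lambda>i. if i \<in> {3, 4} then 1 else 2)"
  by unfold_locales (auto simp: dmin_F dsym_def Sset_def rank_def)

lemma SF: "Sset TF4 = {1, 2, 3, 4}"
  by (auto simp: Sset_def rank_def)

lemma adjacent_F: "adjacent TF4 i j = (i \<in> {1..4} \<and> j \<in> {1..4} \<and> (j = i + 1 \<or> i = j + 1))"
  by (auto simp: adjacent_def dynkin_edge_def Sset_def rank_def)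

lemma H_F:
  assumes "valid_vert TF4 (i, n)" "valid_vert TF4 (j, n + of_int k * dmin TF4)"
  shows "arrows TF4 (i, n) (j, n + of_int k * dmin TF4) = ARF i j k"
proof -
  let ?x = "of_int k * (1/2) :: rat"
  have c1: "(n + ?x = n + 1) = (k = 2)" "(n + ?x = n) = (k = 0)" "(n = n + ?x + 1) = (k = -2)"
    "(n + ?x = n + 1/2) = (k = 1)" "(n + ?x = n - 1/2) = (k = -1)" "(n = n + ?x + 1/2) = (k = -1)"
    by linarith+
  show ?thesis
    unfolding arrows_def Let_def ARF_def using assms
    by (simp only: dmin_F c1 if_True conj_assoc prod.sel cartan_type.case simp_thms)
qed

lemma ID_F:
  assumes "i \<in> {1, 2, 3, 4}" "j \<in> {1, 2, 3, 4}"
  shows "Ci (\<lambda>i. if i \<in> {3, 4} then 1 else 2) (adjacent TF4) i j k = of_int (ARF i j k - ARF j i (-k))"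
proof -
  have e: "Ci (\<lambda>i. if i \<in> {3, 4} then 1 else 2) (adjacent TF4) i j k =
    Cb (i = j) (adjacent TF4 i j) (i < j) (j < i) (if i \<in> {3, 4} then 1 else 2) (if j \<in> {3, 4} then 1 else 2) k"
    by (rule Ci_b[OF adjacent_sym])
  from assms have "i = 1 \<or> i = 2 \<or> i = 3 \<or> i = 4" "j = 1 \<or> j = 2 \<or> j = 3 \<or> j = 4" by auto
  then show ?thesis unfolding e
    apply -
    apply (elim disjE)
    apply (simp_all add: adjacent_F)
    subgoal by (rule Cb_enum; auto simp: Cb_def SWb_def LTb_def ARF_def upto.simps)
    subgoal by (rule Cb_enum; auto simp: Cb_def SWb_def LTb_def ARF_def upto.simps)
    subgoal by (rule Cb_enum; auto simp: Cb_def SWb_def LTb_def ARF_def upto.simps)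
    subgoal by (rule Cb_enum; auto simp: Cb_def SWb_def LTb_def ARF_def upto.simps)
    subgoal by (rule Cb_enum; auto simp: Cb_def SWb_def LTb_def ARF_def upto.simps)
    subgoal by (rule Cb_enum; auto simp: Cb_def SWb_def LTb_def ARF_def upto.simps)
    subgoal by (rule Cb_enum; auto simp: Cb_def SWb_def LTb_def ARF_def upto.simps)
    subgoal by (rule Cb_enum; auto simp: Cb_def SWb_def LTb_def ARF_def upto.simps)
    subgoal by (rule Cb_enum; auto simp: Cb_def SWb_def LTb_def ARF_def upto.simps)
    subgoal by (rule Cb_enum; auto simp: Cb_def SWb_def LTb_def ARF_def upto.simps)
    subgoal by (rule Cb_enum; auto simp: Cb_def SWb_def LTb_def ARF_def upto.simps)
    subgoal by (rule Cb_enum; auto simp: Cb_def SWb_def LTb_def ARF_def upto.simps)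
    subgoal by (rule Cb_enum; auto simp: Cb_def SWb_def LTb_def ARF_def upto.simps)
    subgoal by (rule Cb_enum; auto simp: Cb_def SWb_def LTb_def ARF_def upto.simps)
    subgoal by (rule Cb_enum; auto simp: Cb_def SWb_def LTb_def ARF_def upto.simps)
    subgoal by (rule Cb_enum; auto simp: Cb_def SWb_def LTb_def ARF_def upto.simps)
    done
qed

lemma comb_F:
  assumes "valid_vert TF4 u" "valid_vert TF4 v"
  shows "s_omega TF4 u v - s_omega TF4 u (vplus TF4 v) - s_omega TF4 (vplus TF4 u) v
     + s_omega TF4 (vplus TF4 u) (vplus TF4 v) = of_int (exch TF4 u v)"
proof -
  interpret cdata TF4 "\<lambda>i. if i \<in> {3, 4} then 1 else 2" by (rule cdata_F)
  show ?thesis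
  proof (rule comb_generic[where AR = ARF])
    fix i j k n
    assume "valid_vert TF4 (i, n)" "valid_vert TF4 (j, n + of_int k * dmin TF4)"
    then show "arrows TF4 (i, n) (j, n + of_int k * dmin TF4) = ARF i j k" by (rule H_F)
  next
    fix i j k
    assume "i \<in> Sset TF4" "j \<in> Sset TF4"
    then show "Ci (\<lambda>i. if i \<in> {3, 4} then 1 else 2) (adjacent TF4) i j k = of_int (ARF i j k - ARF j i (-k))"
      unfolding SF by (rule ID_F)
  qed (use assms in auto)
qed

definition ARSb :: "bool \<Rightarrow> bool \<Rightarrow> bool \<Rightarrow> bool \<Rightarrow> int \<Rightarrow> int" where
  "ARSb e ad lt gt k = of_bool (e \<and> k = 1) + of_bool (ad \<and> gt \<and> k = 0) + of_bool (ad \<and> lt \<and> k = -1)"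

lemma SL_bool:
  assumes "e \<Longrightarrow> \<not> ad" "e \<Longrightarrow> \<not> lt \<and> \<not> gt" "\<not> e \<Longrightarrow> lt = (\<not> gt)"
  shows "Cb e ad lt gt 1 1 k = of_int (ARSb e ad lt gt k - ARSb e ad gt lt (-k))"
proof (cases "e \<or> ad")
  case False
  then show ?thesis by (simp add: Cb_far ARSb_def)
next
  case True
  show ?thesis
  proof (rule Cb_enum)
    fix k :: int assume "k > 1 \<or> k < - 1"
    then show "of_int (ARSb e ad lt gt k - ARSb e ad gt lt (-k)) = 0" by (auto simp: ARSb_def)
  next
    fix k :: int assume "k \<in> set [- 1..1]"
    then show "Cb e ad lt gt 1 1 k = of_int (ARSb e ad lt gt k - ARSb e ad gt lt (-k))"
      using True assms by (cases e; cases ad; cases lt; cases gt; auto simp: Cb_def SWb_def LTb_def ARSb_def upto.simps)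
  qed simp_all
qed

definition simply_laced :: "cartan_type \<Rightarrow> bool" where
  "simply_laced t = (case t of TA l \<Rightarrow> True | TD l \<Rightarrow> True | TE l \<Rightarrow> True | _ \<Rightarrow> False)"

lemma sl_dsym: "simply_laced t \<Longrightarrow> dsym t i = 1"
  by (cases t) (auto simp: simply_laced_def dsym_def)

lemma rank_pos: "valid_type t \<Longrightarrow> rank t \<ge> 1"
  by (cases t) (auto simp: valid_type_def rank_def)

lemma sl_dmin: "simply_laced t \<Longrightarrow> valid_type t \<Longrightarrow> dmin t = 1"
  unfolding dmin_def Sset_def using rank_pos[of t]
  by (rule_tac Min_eqI) (auto simp: sl_dsym image_iff intro: bexI[of _ 1])

lemma cdata_SL: "simply_laced t \<Longrightarrow> valid_type t \<Longrightarrow> cdata t (\<lambda>i. 1)"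
  by unfold_locales (auto simp: sl_dmin sl_dsym)

lemma adj_irrefl: "valid_type t \<Longrightarrow> \<not> adjacent t i i"
  by (cases t) (auto simp: adjacent_def dynkin_edge_def valid_type_def)

lemma H_SL:
  assumes "simply_laced t" "valid_type t" "valid_vert t (i, n)" "valid_vert t (j, n + of_int k * dmin t)"
  shows "arrows t (i, n) (j, n + of_int k * dmin t) = ARSb (i = j) (adjacent t i j) (i < j) (j < i) k"
proof -
  have c1: "(n + of_int k * 1 = n + 1) = (k = 1)" "(n + of_int k * 1 = n) = (k = 0)" "(n = n + of_int k * 1 + 1) = (k = -1)"
    by linarith+
  have X: "arrows t (i, n) (j, n + of_int k * dmin t) = of_bool (i = j \<and> k = 1) + of_bool (adjacent t i j \<and> j < i \<and> k = 0)
     + of_bool (adjacent t i j \<and> i < j \<and> k = -1)"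
    using assms(1) unfolding arrows_def Let_def sl_dmin[OF assms(1,2)] using assms(3,4)[unfolded sl_dmin[OF assms(1,2)]]
    by (cases t) (simp_all only: c1 if_True conj_assoc prod.sel cartan_type.case simp_thms simply_laced_def)
  show ?thesis unfolding X ARSb_def by (simp only: conj_ac)
qed

lemma comb_SL:
  assumes "simply_laced t" "valid_type t" "valid_vert t u" "valid_vert t v"
  shows "s_omega t u v - s_omega t u (vplus t v) - s_omega t (vplus t u) v
     + s_omega t (vplus t u) (vplus t v) = of_int (exch t u v)"
proof -
  interpret cdata t "\<lambda>i. 1" by (rule cdata_SL[OF assms(1,2)])
  show ?thesis
  proof (rule comb_generic[where AR = "\<lambda>i j k. ARSb (i = j) (adjacent t i j) (i < j) (j < i) k"])
    fix i j k n
    assume "valid_vert t (i, n)" "valid_vert t (j, n + of_int k * dmin t)"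
    then show "arrows t (i, n) (j, n + of_int k * dmin t) = ARSb (i = j) (adjacent t i j) (i < j) (j < i) k"
      by (rule H_SL[OF assms(1,2)])
  next
    fix i j k
    have "Ci (\<lambda>i. 1) (adjacent t) i j k = Cb (i = j) (adjacent t i j) (i < j) (j < i) 1 1 k"
      by (rule Ci_b[OF adjacent_sym])
    also have "\<dots> = of_int (ARSb (i = j) (adjacent t i j) (i < j) (j < i) k - ARSb (i = j) (adjacent t i j) (j < i) (i < j) (-k))"
      by (rule SL_bool) (use adj_irrefl[OF assms(2)] in auto)
    finally show "Ci (\<lambda>i. 1) (adjacent t) i j k = of_int (ARSb (i = j) (adjacent t i j) (i < j) (j < i) k - ARSb (j = i) (adjacent t j i) (j < i) (i < j) (-k))"
      by (simp add: eq_commute[of j i] adjacent_sym[of t j i])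
  qed (use assms in auto)
qed

lemma comb_all:
  assumes "valid_type t" "valid_vert t u" "valid_vert t v"
  shows "s_omega t u v - s_omega t u (vplus t v) - s_omega t (vplus t u) v
     + s_omega t (vplus t u) (vplus t v) = of_int (exch t u v)"
proof (cases t)
  case (TB l)
  then show ?thesis using assms comb_B[of l u v] by (simp add: valid_type_def)
next
  case (TC l)
  then show ?thesis using assms comb_C[of l u v] by (simp add: valid_type_def)
next
  case TF4
  then show ?thesis using assms comb_F[of u v] by simp
next
  case TG2
  then show ?thesis using assms comb_G[of u v] by simp
qed (use assms comb_SL[of t u v] in \<open>auto simp: simply_laced_def\<close>)

lemma valid_vplus_all:
  assumes "valid_type t" "valid_vert t u"
  shows "valid_vert t (vplus t u)"
proof (cases t)
  case (TB l)
  then interpret cdata t "\<lambda>i. if i = l then 1 else 2" using cdata_B assms(1) by (simp add: valid_type_def)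
  show ?thesis by (rule valid_vplus[OF assms(2)])
next
  case (TC l)
  then interpret cdata t "\<lambda>i. if i = l then 2 else 1" using cdata_C assms(1) by (simp add: valid_type_def)
  show ?thesis by (rule valid_vplus[OF assms(2)])
next
  case TF4
  then interpret cdata t "\<lambda>i. if i \<in> {3, 4} then 1 else 2" using cdata_F by simp
  show ?thesis by (rule valid_vplus[OF assms(2)])
next
  case TG2
  then interpret cdata t "\<lambda>i. if i = 2 then 3 else 1" using cdata_G by simp
  show ?thesis by (rule valid_vplus[OF assms(2)])
next
  case (TA l)
  then interpret cdata t "\<lambda>i. 1" using cdata_SL assms(1) by (simp add: simply_laced_def)
  show ?thesis by (rule valid_vplus[OF assms(2)])
next
  case (TD l)
  then interpret cdata t "\<lambda>i. 1" using cdata_SL assms(1) by (simp add: simply_laced_def)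
  show ?thesis by (rule valid_vplus[OF assms(2)])
next
  case (TE l)
  then interpret cdata t "\<lambda>i. 1" using cdata_SL assms(1) by (simp add: simply_laced_def)
  show ?thesis by (rule valid_vplus[OF assms(2)])
qed

lemma Fract_mono_mult: "Fract (Poly_Mapping.single a (1::complex)) 1 * Fract (Poly_Mapping.single b 1) 1 =
   Fract (Poly_Mapping.single (a + b) 1) (1::mpoly)"
  by (simp add: mult_single)

lemma Fract_mono_prod: "(\<Prod>x\<in>A. Fract (Poly_Mapping.single (E x) (1::complex)) (1::mpoly)) =
   Fract (Poly_Mapping.single (\<Sum>x\<in>A. E x) 1) 1"
proof (induction A rule: infinite_finite_induct)
  case (insert x F)
  then show ?case by (simp add: mult_single)
qed (simp_all add: fract_collapse)

lemma Fract1_add: "Fract (p + q) (1::mpoly) = Fract p 1 + Fract q 1"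
  by simp

lemma Fract1_sum: "Fract (sum g A) (1::mpoly) = (\<Sum>a\<in>A. Fract (g a) 1)"
  by (rule additive_sum) (auto simp: fract_collapse)

lemma Fract1_nz: "p \<noteq> 0 \<Longrightarrow> Fract p (1::mpoly) \<noteq> 0"
  by (simp add: Zero_fract_def eq_fract del: fract_collapse)

lemma factor_lemma:
  fixes x y :: ratfun
  assumes "y \<noteq> 0" "k \<le> N"
  shows "(x / y) ^ k * y ^ N = x ^ k * y ^ (N - k)"
proof -
  have "y ^ N = y ^ k * y ^ (N - k)" using assms(2) by (simp add: power_add[symmetric])
  then show ?thesis using assms(1) by (simp add: power_divide)
qed

lemma pvars_keys: "m \<in> Poly_Mapping.keys p \<Longrightarrow> Poly_Mapping.keys m \<subseteq> pvars p"
  unfolding pvars_def by blast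

lemma finite_pvars: "finite (pvars p)"
  unfolding pvars_def by simp

lemma sp_nz:
  assumes "b \<noteq> 0"
  shows "sigma_poly t b \<noteq> 0"
proof -
  define K where "K = Poly_Mapping.keys b"
  define V where "V = pvars b"
  define N where "N = (\<Sum>m\<in>K. \<Sum>v\<in>V. Poly_Mapping.lookup m v)"
  define E where "E m = (\<Sum>v\<in>V. Poly_Mapping.single v (Poly_Mapping.lookup m v) +
     Poly_Mapping.single (vplus t v) (N - Poly_Mapping.lookup m v))" for m
  define P where "P = (\<Prod>v\<in>V. rvar (vplus t v) ^ N)"
  have fK: "finite K" and fV: "finite V" by (simp_all add: K_def V_def finite_pvars)
  have kV: "m \<in> K \<Longrightarrow> Poly_Mapping.keys m \<subseteq> V" for m
    by (simp add: K_def V_def pvars_keys)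
  have le: "m \<in> K \<Longrightarrow> v \<in> V \<Longrightarrow> Poly_Mapping.lookup m v \<le> N" for m v
  proof -
    assume "m \<in> K" "v \<in> V"
    have "Poly_Mapping.lookup m v \<le> (\<Sum>v\<in>V. Poly_Mapping.lookup m v)"
      by (rule member_le_sum[OF \<open>v \<in> V\<close> _ fV]) simp
    also have "\<dots> \<le> N" unfolding N_def
      by (rule member_le_sum[OF \<open>m \<in> K\<close> _ fK, where f = "\<lambda>m. \<Sum>v\<in>V. Poly_Mapping.lookup m v"]) simp
    finally show ?thesis .
  qed
  have claim1: "smono t m * P = Fract (Poly_Mapping.single (E m) 1) 1" if "m \<in> K" for m
  proof -
    have "smono t m * P = (\<Prod>v\<in>V. sigma_gen t v ^ Poly_Mapping.lookup m v * rvar (vplus t v) ^ N)"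
      unfolding P_def using mono_sup[OF fV kV[OF that]] by (simp add: prod.distrib)
    also have "\<dots> = (\<Prod>v\<in>V. Fract (Poly_Mapping.single (Poly_Mapping.single v (Poly_Mapping.lookup m v) +
     Poly_Mapping.single (vplus t v) (N - Poly_Mapping.lookup m v)) 1) 1)"
    proof (rule prod.cong[OF refl])
      fix v assume "v \<in> V"
      have "sigma_gen t v ^ Poly_Mapping.lookup m v * rvar (vplus t v) ^ N =
          rvar v ^ Poly_Mapping.lookup m v * rvar (vplus t v) ^ (N - Poly_Mapping.lookup m v)"
        unfolding sigma_gen_vplus by (rule factor_lemma[OF rvar_nz le[OF that \<open>v \<in> V\<close>]])
      then show "sigma_gen t v ^ Poly_Mapping.lookup m v * rvar (vplus t v) ^ N =
          Fract (Poly_Mapping.single (Poly_Mapping.single v (Poly_Mapping.lookup m v) +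
           Poly_Mapping.single (vplus t v) (N - Poly_Mapping.lookup m v)) 1) 1"
        by (simp add: rvar_power mult_single)
    qed
    also have "\<dots> = Fract (Poly_Mapping.single (E m) 1) 1"
      unfolding E_def by (rule Fract_mono_prod)
    finally show ?thesis .
  qed
  define Q where "Q = (\<Sum>m\<in>K. Poly_Mapping.single (E m) (Poly_Mapping.lookup b m))"
  have claim2: "sigma_poly t b * P = Fract Q 1"
  proof -
    have "sigma_poly t b * P = (\<Sum>m\<in>K. rconst (Poly_Mapping.lookup b m) * (smono t m * P))"
      unfolding sigma_poly_def' K_def by (simp add: sum_distrib_right mult.assoc)
    also have "\<dots> = (\<Sum>m\<in>K. Fract (Poly_Mapping.single (E m) (Poly_Mapping.lookup b m)) 1)"
      by (rule sum.cong[OF refl]) (simp add: claim1 rconst_def mconst_def mult_single)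
    also have "\<dots> = Fract Q 1" unfolding Q_def by (rule Fract1_sum[symmetric])
    finally show ?thesis .
  qed
  have lookE: "Poly_Mapping.lookup (E m) w = Poly_Mapping.lookup m w +
      (\<Sum>v\<in>V. (N - Poly_Mapping.lookup m v) when vplus t v = w)" if "w \<in> V" for m w
  proof -
    have "Poly_Mapping.lookup (E m) w = (\<Sum>v\<in>V. (Poly_Mapping.lookup m v when v = w)) +
      (\<Sum>v\<in>V. (N - Poly_Mapping.lookup m v) when vplus t v = w)"
      unfolding E_def by (simp add: lookup_sum lookup_add lookup_single sum.distrib)
    also have "(\<Sum>v\<in>V. (Poly_Mapping.lookup m v when v = w)) = Poly_Mapping.lookup m w"
      using fV that by (simp add: when_def)
    finally show ?thesis .
  qed
  have claim3: "m = m'" if "m \<in> K" "m' \<in> K" "E m = E m'" for m m'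
  proof (rule ccontr)
    assume ne: "m \<noteq> m'"
    define D where "D = {v\<in>V. Poly_Mapping.lookup m v \<noteq> Poly_Mapping.lookup m' v}"
    have fD: "finite D" using fV by (simp add: D_def)
    have "\<exists>v0. Poly_Mapping.lookup m v0 \<noteq> Poly_Mapping.lookup m' v0"
    proof (rule ccontr)
      assume "\<not> (\<exists>v0. Poly_Mapping.lookup m v0 \<noteq> Poly_Mapping.lookup m' v0)"
      then have "m = m'" by (intro poly_mapping_eqI) (metis surj_pair)
      then show False using ne by simp
    qed
    then obtain v0 where "Poly_Mapping.lookup m v0 \<noteq> Poly_Mapping.lookup m' v0" by (elim exE)
    then have "v0 \<in> V" using kV[OF that(1)] kV[OF that(2)] by (metis in_keys_iff subsetD)
    then have "D \<noteq> {}" using \<open>Poly_Mapping.lookup m v0 \<noteq> Poly_Mapping.lookup m' v0\<close> unfolding D_def by blast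
    define \<mu> where "\<mu> = Min (snd ` D)"
    have "\<mu> \<in> snd ` D" unfolding \<mu>_def using fD \<open>D \<noteq> {}\<close> by (intro Min_in) auto
    then obtain w where w: "w \<in> D" "snd w = \<mu>" by auto
    have minw: "v \<in> D \<Longrightarrow> snd w \<le> snd v" for v
      unfolding w(2) \<mu>_def using fD by (intro Min_le) auto
    have wV: "w \<in> V" using w(1) by (simp add: D_def)
    have "(\<Sum>v\<in>V. (N - Poly_Mapping.lookup m v) when vplus t v = w) =
          (\<Sum>v\<in>V. (N - Poly_Mapping.lookup m' v) when vplus t v = w)"
    proof (rule sum.cong[OF refl])
      fix v assume "v \<in> V"
      show "((N - Poly_Mapping.lookup m v) when vplus t v = w) = ((N - Poly_Mapping.lookup m' v) when vplus t v = w)"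
      proof (cases "vplus t v = w")
        case True
        then have "snd v < snd w" using vplus_snd[of v t] by simp
        then have "v \<notin> D" using minw by (meson not_le)
        then show ?thesis using \<open>v \<in> V\<close> by (simp add: D_def)
      qed simp
    qed
    then have "Poly_Mapping.lookup m w = Poly_Mapping.lookup m' w"
      using lookE[OF wV, of m] lookE[OF wV, of m'] that(3) by simp
    then show False using w(1) by (simp add: D_def)
  qed
  obtain m0 where m0: "m0 \<in> K" using assms unfolding K_def by (metis all_not_in_conv keys_eq_empty)
  have "Poly_Mapping.lookup Q (E m0) = (\<Sum>m\<in>K. Poly_Mapping.lookup b m when E m = E m0)"
    unfolding Q_def by (simp add: lookup_sum lookup_single)
  also have "\<dots> = (\<Sum>m\<in>K. if m = m0 then Poly_Mapping.lookup b m else 0)"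
    by (rule sum.cong[OF refl]) (auto simp: when_def dest: claim3[OF _ m0])
  also have "\<dots> = Poly_Mapping.lookup b m0" using fK m0 by simp
  also have "\<dots> \<noteq> 0" using m0 unfolding K_def by (simp add: in_keys_iff)
  finally have "Q \<noteq> 0" by auto
  then have "sigma_poly t b * P \<noteq> 0" using claim2 Fract1_nz by simp
  then show ?thesis by auto
qed

lemma sigma_wd:
  assumes "b \<noteq> 0" "d \<noteq> 0" "Fract a b = Fract c d"
  shows "sigma_poly t a / sigma_poly t b = sigma_poly t c / sigma_poly t d"
proof -
  have "a * d = c * b" using assms by (simp add: eq_fract)
  then have "sigma_poly t a * sigma_poly t d = sigma_poly t c * sigma_poly t b"
    by (metis sp_mult)
  then show ?thesis using sp_nz[OF assms(1)] sp_nz[OF assms(2)] by (simp add: frac_eq_eq)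
qed

lemma sigma_Fract:
  assumes "b \<noteq> 0"
  shows "sigma t (Fract a b) = sigma_poly t a / sigma_poly t b"
proof -
  let ?P = "\<lambda>r. \<exists>a' b'. b' \<noteq> 0 \<and> Fract a b = Fract a' b' \<and> r = sigma_poly t a' / sigma_poly t b'"
  have "?P (sigma_poly t a / sigma_poly t b)"
    by (rule exI[of _ a], rule exI[of _ b]) (intro conjI assms refl)
  then have "?P (SOME r. ?P r)" by (rule someI)
  then obtain a' b' where h0: "b' \<noteq> 0 \<and> Fract a b = Fract a' b' \<and>
     (SOME r. ?P r) = sigma_poly t a' / sigma_poly t b'" by (elim exE) (rule that)
  note h = conjunct1[OF h0] conjunct1[OF conjunct2[OF h0]] conjunct2[OF conjunct2[OF h0]]
  have "sigma t (Fract a b) = (SOME r. ?P r)" unfolding sigma_def by (rule refl)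
  also have "\<dots> = sigma_poly t a' / sigma_poly t b'" by (rule h(3))
  also have "\<dots> = sigma_poly t a / sigma_poly t b"
    by (rule sigma_wd[OF assms h(1) h(2), symmetric])
  finally show ?thesis .
qed

lemma sigma_Fract1: "sigma t (Fract a 1) = sigma_poly t a"
  by (simp add: sigma_Fract)

lemma sigma_add: "sigma t (x + y) = sigma t x + sigma t y"
proof (cases x)
  case (Fract a b)
  show ?thesis
  proof (cases y)
    case (Fract c d)
    have nz: "sigma_poly t b \<noteq> 0" "sigma_poly t d \<noteq> 0" using sp_nz \<open>b \<noteq> 0\<close> \<open>d \<noteq> 0\<close> by auto
    have "sigma t (x + y) = sigma_poly t (a * d + c * b) / sigma_poly t (b * d)"
      using \<open>x = Fract a b\<close> \<open>b \<noteq> 0\<close> Fract by (simp add: sigma_Fract)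
    also have "\<dots> = sigma_poly t a / sigma_poly t b + sigma_poly t c / sigma_poly t d"
      using nz by (simp add: sp_add sp_mult add_frac_eq)
    finally show ?thesis using \<open>x = Fract a b\<close> \<open>b \<noteq> 0\<close> Fract by (simp add: sigma_Fract)
  qed
qed

lemma sigma_mult: "sigma t (x * y) = sigma t x * sigma t y"
proof (cases x)
  case (Fract a b)
  show ?thesis
  proof (cases y)
    case (Fract c d)
    have "sigma t (x * y) = sigma_poly t (a * c) / sigma_poly t (b * d)"
      using \<open>x = Fract a b\<close> \<open>b \<noteq> 0\<close> Fract by (simp add: sigma_Fract)
    also have "\<dots> = sigma_poly t a / sigma_poly t b * (sigma_poly t c / sigma_poly t d)"
      by (simp add: sp_mult)
    finally show ?thesis using \<open>x = Fract a b\<close> \<open>b \<noteq> 0\<close> Fract by (simp add: sigma_Fract)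
  qed
qed

lemma sigma_0[simp]: "sigma t 0 = 0"
  using sigma_Fract1[of t 0] by (simp add: fract_collapse)

lemma sigma_1[simp]: "sigma t 1 = 1"
  using sigma_Fract1[of t 1] by (simp add: fract_collapse)

lemma sigma_sum: "sigma t (sum g A) = (\<Sum>a\<in>A. sigma t (g a))"
  by (rule additive_sum) (auto simp: sigma_add)

lemma sigma_rconst: "sigma t (rconst c) = rconst c"
  by (simp only: rconst_def sigma_Fract1 sp_mconst)

lemma sigma_rvar: "sigma t (rvar v) = sigma_gen t v"
  by (simp add: rvar_def sigma_Fract1 sp_mvar)

lemma sigma_inverse: "sigma t (inverse x) = inverse (sigma t x)"
proof (cases "x = 0")
  case False
  have "sigma t x * sigma t (inverse x) = 1" using False by (simp add: sigma_mult[symmetric])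
  then show ?thesis by (metis inverse_unique)
qed simp

lemma sigma_divide: "sigma t (x / y) = sigma t x / sigma t y"
  by (simp add: divide_inverse sigma_mult sigma_inverse)

lemma rconst_of_nat: "rconst (of_nat n) = of_nat n"
  by (induction n) (simp_all add: rconst_add)

lemma mono_minus_single:
  assumes "finite V" "Poly_Mapping.keys m \<subseteq> V" "u \<in> V" "Poly_Mapping.lookup m u \<noteq> 0"
  shows "smono t (m - Poly_Mapping.single u 1) =
     sigma_gen t u ^ (Poly_Mapping.lookup m u - 1) * (\<Prod>v\<in>V - {u}. sigma_gen t v ^ Poly_Mapping.lookup m v)"
proof -
  have k: "Poly_Mapping.keys (m - Poly_Mapping.single u 1) \<subseteq> V"
    using assms(2) by (auto simp: in_keys_iff lookup_minus lookup_single when_def split: if_splits)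
  have "smono t (m - Poly_Mapping.single u 1) = (\<Prod>v\<in>V. sigma_gen t v ^ Poly_Mapping.lookup (m - Poly_Mapping.single u 1) v)"
    by (rule mono_sup[OF assms(1) k])
  also have "\<dots> = sigma_gen t u ^ Poly_Mapping.lookup (m - Poly_Mapping.single u 1) u *
      (\<Prod>v\<in>V - {u}. sigma_gen t v ^ Poly_Mapping.lookup (m - Poly_Mapping.single u 1) v)"
    using assms(1,3) by (rule prod.remove)
  also have "\<dots> = sigma_gen t u ^ (Poly_Mapping.lookup m u - 1) * (\<Prod>v\<in>V - {u}. sigma_gen t v ^ Poly_Mapping.lookup m v)"
    by (auto simp: lookup_minus lookup_single when_def intro!: prod.cong)
  finally show ?thesis .
qed

lemma rpderiv_mono:
  assumes "finite V" "Poly_Mapping.keys m \<subseteq> V"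
  shows "rpderiv w (smono t m) = (\<Sum>u\<in>V. rconst (of_nat (Poly_Mapping.lookup m u)) *
       smono t (m - Poly_Mapping.single u 1) * rpderiv w (sigma_gen t u))"
proof -
  have "rpderiv w (smono t m) = (\<Sum>u\<in>V. rpderiv w (sigma_gen t u ^ Poly_Mapping.lookup m u) *
      (\<Prod>v\<in>V - {u}. sigma_gen t v ^ Poly_Mapping.lookup m v))"
    unfolding mono_sup[OF assms] by (rule rpderiv_prod)
  also have "\<dots> = (\<Sum>u\<in>V. rconst (of_nat (Poly_Mapping.lookup m u)) *
       smono t (m - Poly_Mapping.single u 1) * rpderiv w (sigma_gen t u))"
  proof (rule sum.cong[OF refl])
    fix u assume u: "u \<in> V"
    show "rpderiv w (sigma_gen t u ^ Poly_Mapping.lookup m u) *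
      (\<Prod>v\<in>V - {u}. sigma_gen t v ^ Poly_Mapping.lookup m v) =
      rconst (of_nat (Poly_Mapping.lookup m u)) * smono t (m - Poly_Mapping.single u 1) * rpderiv w (sigma_gen t u)"
    proof (cases "Poly_Mapping.lookup m u = 0")
      case True
      then show ?thesis by (simp add: rpderiv_power)
    next
      case False
      show ?thesis
        unfolding mono_minus_single[OF assms u False] rpderiv_power rconst_of_nat
        by (simp add: mult_ac)
    qed
  qed
  finally show ?thesis .
qed

lemma sp_mpderiv:
  "sigma_poly t (mpderiv u a) = (\<Sum>m\<in>Poly_Mapping.keys a. rconst (Poly_Mapping.lookup a m) *
      rconst (of_nat (Poly_Mapping.lookup m u)) * smono t (m - Poly_Mapping.single u 1))"
  unfolding mpderiv_def sp_sum sp_single rconst_mult by (rule refl)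

lemma chain_poly:
  assumes "finite V" "pvars a \<subseteq> V"
  shows "rpderiv w (sigma_poly t a) = (\<Sum>u\<in>V. sigma_poly t (mpderiv u a) * rpderiv w (sigma_gen t u))"
proof -
  have "rpderiv w (sigma_poly t a) = (\<Sum>m\<in>Poly_Mapping.keys a. rconst (Poly_Mapping.lookup a m) * rpderiv w (smono t m))"
    unfolding sigma_poly_def' rpderiv_sum by (simp add: rpderiv_mult rpderiv_rconst)
  also have "\<dots> = (\<Sum>m\<in>Poly_Mapping.keys a. \<Sum>u\<in>V. rconst (Poly_Mapping.lookup a m) * (rconst (of_nat (Poly_Mapping.lookup m u)) *
       smono t (m - Poly_Mapping.single u 1) * rpderiv w (sigma_gen t u)))"
  proof (rule sum.cong[OF refl])
    fix m assume "m \<in> Poly_Mapping.keys a"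
    then have "Poly_Mapping.keys m \<subseteq> V" using assms(2) pvars_keys by blast
    then show "rconst (Poly_Mapping.lookup a m) * rpderiv w (smono t m) = (\<Sum>u\<in>V. rconst (Poly_Mapping.lookup a m) * (rconst (of_nat (Poly_Mapping.lookup m u)) *
       smono t (m - Poly_Mapping.single u 1) * rpderiv w (sigma_gen t u)))"
      using rpderiv_mono[OF assms(1), of m w t] by (simp add: sum_distrib_left)
  qed
  also have "\<dots> = (\<Sum>u\<in>V. \<Sum>m\<in>Poly_Mapping.keys a. rconst (Poly_Mapping.lookup a m) * (rconst (of_nat (Poly_Mapping.lookup m u)) *
       smono t (m - Poly_Mapping.single u 1) * rpderiv w (sigma_gen t u)))"
    by (rule sum.swap)
  also have "\<dots> = (\<Sum>u\<in>V. sigma_poly t (mpderiv u a) * rpderiv w (sigma_gen t u))"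
    unfolding sp_mpderiv sum_distrib_right by (intro sum.cong refl) (simp add: mult_ac)
  finally show ?thesis .
qed

lemma chain:
  assumes "finite V" "ratfun_in V f"
  shows "rpderiv w (sigma t f) = (\<Sum>u\<in>V. sigma t (rpderiv u f) * rpderiv w (sigma_gen t u))"
proof -
  obtain a b where h: "b \<noteq> 0" "f = Fract a b" "pvars a \<subseteq> V" "pvars b \<subseteq> V"
    using assms(2) unfolding ratfun_in_def by blast
  let ?A = "sigma_poly t a" and ?B = "sigma_poly t b"
  let ?G = "\<lambda>u. rpderiv w (sigma_gen t u)"
  have bb: "b * b \<noteq> 0" using h(1) by simp
  have "(\<Sum>u\<in>V. sigma t (rpderiv u f) * ?G u) =
     (\<Sum>u\<in>V. ((sigma_poly t (mpderiv u a) * ?G u) * ?B - ?A * (sigma_poly t (mpderiv u b) * ?G u)) / (?B * ?B))"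
  proof (rule sum.cong[OF refl])
    fix u
    show "sigma t (rpderiv u f) * ?G u = ((sigma_poly t (mpderiv u a) * ?G u) * ?B - ?A * (sigma_poly t (mpderiv u b) * ?G u)) / (?B * ?B)"
      unfolding h(2) rpderiv_Fract[OF h(1)] sigma_Fract[OF bb] sp_diff sp_mult
      by (simp add: algebra_simps)
  qed
  also have "\<dots> = ((\<Sum>u\<in>V. sigma_poly t (mpderiv u a) * ?G u) * ?B - ?A * (\<Sum>u\<in>V. sigma_poly t (mpderiv u b) * ?G u)) / (?B * ?B)"
    by (simp add: sum_divide_distrib[symmetric] sum_subtractf sum_distrib_left sum_distrib_right)
  also have "\<dots> = (rpderiv w ?A * ?B - ?A * rpderiv w ?B) / (?B * ?B)"
    using chain_poly[OF assms(1) h(3)] chain_poly[OF assms(1) h(4)] by simp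
  also have "\<dots> = rpderiv w (sigma t f)"
    unfolding h(2) sigma_Fract[OF h(1)] rpderiv_divide by (rule refl)
  finally show ?thesis by simp
qed

lemma rvar_rpderiv_gen:
  "rvar w * rpderiv w (sigma_gen t u) = sigma_gen t u * (of_bool (w = u) - of_bool (w = vplus t u))"
proof -
  have nz: "rvar (vplus t u) \<noteq> 0" by (rule rvar_nz)
  have ne: "vplus t u \<noteq> u" by (rule vplus_neq)
  show ?thesis
    unfolding sigma_gen_vplus rpderiv_divide rpderiv_rvar
    using nz ne by (auto simp: field_simps power2_eq_square)
qed

lemma delta_sum:
  fixes F :: "vert \<Rightarrow> ratfun"
  assumes "finite W" "a \<in> W" "b \<in> W" "a \<noteq> b"
  shows "(\<Sum>w\<in>W. F w * (of_bool (w = a) - of_bool (w = b))) = F a - F b"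
proof -
  have "\<And>w. F w * (of_bool (w = a) - of_bool (w = b)) = (if w = a then F a else 0) - (if w = b then F b else 0)"
    using assms(4) by auto
  then have "(\<Sum>w\<in>W. F w * (of_bool (w = a) - of_bool (w = b))) =
      (\<Sum>w\<in>W. if w = a then F a else 0) - (\<Sum>w\<in>W. if w = b then F b else 0)"
    by (simp add: sum_subtractf)
  also have "\<dots> = F a - F b" using assms by simp
  finally show ?thesis .
qed

lemma prod_sums: "(c::ratfun) * sum f A * sum g B = (\<Sum>i\<in>A. \<Sum>j\<in>B. c * (f i * g j))"
proof -
  have "c * sum f A * sum g B = c * (\<Sum>i\<in>A. \<Sum>j\<in>B. f i * g j)"
    by (simp only: mult.assoc sum_product)
  also have "\<dots> = (\<Sum>i\<in>A. \<Sum>j\<in>B. c * (f i * g j))"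
    by (simp add: sum_distrib_left)
  finally show ?thesis .
qed

lemma sum4_swap:
  "(\<Sum>w\<in>W. \<Sum>z\<in>W. \<Sum>u\<in>V. \<Sum>v\<in>V. F w z u v) = (\<Sum>u\<in>V. \<Sum>v\<in>V. \<Sum>w\<in>W. \<Sum>z\<in>W. F w z u v)"
proof -
  have "(\<Sum>w\<in>W. \<Sum>z\<in>W. \<Sum>u\<in>V. \<Sum>v\<in>V. F w z u v) = (\<Sum>w\<in>W. \<Sum>u\<in>V. \<Sum>z\<in>W. \<Sum>v\<in>V. F w z u v)"
    by (rule sum.cong[OF refl], rule sum.swap)
  also have "\<dots> = (\<Sum>u\<in>V. \<Sum>w\<in>W. \<Sum>z\<in>W. \<Sum>v\<in>V. F w z u v)"
    by (rule sum.swap)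
  also have "\<dots> = (\<Sum>u\<in>V. \<Sum>w\<in>W. \<Sum>v\<in>V. \<Sum>z\<in>W. F w z u v)"
    by (intro sum.cong refl sum.swap)
  also have "\<dots> = (\<Sum>u\<in>V. \<Sum>v\<in>V. \<Sum>w\<in>W. \<Sum>z\<in>W. F w z u v)"
    by (intro sum.cong refl sum.swap)
  finally show ?thesis .
qed

lemma ratfun_in_sigma_poly:
  assumes "pvars p \<subseteq> V"
  shows "ratfun_in (V \<union> vplus t ` V) (sigma_poly t p)"
  unfolding sigma_poly_def
proof (intro ratfun_in_sum ratfun_in_mult ratfun_in_rconst ratfun_in_prod ratfun_in_power)
  fix m v assume "m \<in> Poly_Mapping.keys p" "v \<in> Poly_Mapping.keys m"
  then have "v \<in> V" using assms pvars_keys by blast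
  then show "ratfun_in (V \<union> vplus t ` V) (sigma_gen t v)"
    unfolding sigma_gen_vplus by (intro ratfun_in_divide ratfun_in_rvar) auto
qed

lemma ratfun_in_sigma:
  assumes "ratfun_in V f"
  shows "ratfun_in (V \<union> vplus t ` V) (sigma t f)"
proof -
  obtain a b where h: "b \<noteq> 0" "f = Fract a b" "pvars a \<subseteq> V" "pvars b \<subseteq> V"
    using assms unfolding ratfun_in_def by blast
  show ?thesis unfolding h(2) sigma_Fract[OF h(1)]
    by (intro ratfun_in_divide ratfun_in_sigma_poly h)
qed

lemma inner_identity:
  assumes "finite W" "u \<in> W" "vplus t u \<in> W" "v \<in> W" "vplus t v \<in> W"
  shows "(\<Sum>w\<in>W. \<Sum>z\<in>W. rconst (of_rat (s_omega t w z)) * rvar w * rvar z *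
            (A * rpderiv w (sigma_gen t u)) * (B * rpderiv z (sigma_gen t v))) =
     A * B * sigma_gen t u * sigma_gen t v *
       rconst (of_rat (s_omega t u v - s_omega t u (vplus t v) - s_omega t (vplus t u) v + s_omega t (vplus t u) (vplus t v)))"
proof -
  let ?O = "\<lambda>w z. rconst (of_rat (s_omega t w z))"
  let ?d = "\<lambda>w a. (of_bool (w = a) - of_bool (w = vplus t a)) :: ratfun"
  have "(\<Sum>w\<in>W. \<Sum>z\<in>W. ?O w z * rvar w * rvar z *
            (A * rpderiv w (sigma_gen t u)) * (B * rpderiv z (sigma_gen t v))) =
        (\<Sum>w\<in>W. (\<Sum>z\<in>W. (A * B * sigma_gen t u * sigma_gen t v * ?d w u * ?O w z) * ?d z v))"
  proof (intro sum.cong refl)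
    fix w z
    have "?O w z * rvar w * rvar z * (A * rpderiv w (sigma_gen t u)) * (B * rpderiv z (sigma_gen t v)) =
       ?O w z * A * B * (rvar w * rpderiv w (sigma_gen t u)) * (rvar z * rpderiv z (sigma_gen t v))"
      by (simp add: mult_ac)
    then show "?O w z * rvar w * rvar z * (A * rpderiv w (sigma_gen t u)) * (B * rpderiv z (sigma_gen t v)) =
       (A * B * sigma_gen t u * sigma_gen t v * ?d w u * ?O w z) * ?d z v"
      unfolding rvar_rpderiv_gen by (simp add: mult_ac)
  qed
  also have "\<dots> = (\<Sum>w\<in>W. (A * B * sigma_gen t u * sigma_gen t v * ?d w u * ?O w v) - (A * B * sigma_gen t u * sigma_gen t v * ?d w u * ?O w (vplus t v)))"
    by (intro sum.cong refl delta_sum assms vplus_neq[symmetric])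
  also have "\<dots> = (\<Sum>w\<in>W. A * B * sigma_gen t u * sigma_gen t v * ?d w u * (?O w v - ?O w (vplus t v)))"
    by (simp add: right_diff_distrib)
  also have "\<dots> = (\<Sum>w\<in>W. (A * B * sigma_gen t u * sigma_gen t v * (?O w v - ?O w (vplus t v))) * ?d w u)"
    by (simp add: mult_ac)
  also have "\<dots> = A * B * sigma_gen t u * sigma_gen t v * (?O u v - ?O u (vplus t v)) -
       A * B * sigma_gen t u * sigma_gen t v * (?O (vplus t u) v - ?O (vplus t u) (vplus t v))"
    by (intro delta_sum assms vplus_neq[symmetric])
  also have "\<dots> = A * B * sigma_gen t u * sigma_gen t v *
       rconst (of_rat (s_omega t u v - s_omega t u (vplus t v) - s_omega t (vplus t u) v + s_omega t (vplus t u) (vplus t v)))"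
    by (simp add: of_rat_add of_rat_diff rconst_add rconst_diff algebra_simps)
  finally show ?thesis .
qed

theorem proposition5p1:
  fixes t :: cartan_type and f g :: ratfun
  assumes "valid_type t"
    and "ratfun_in {v. valid_vert t v} f"
    and "ratfun_in {v. valid_vert t v} g"
  shows "sigma t (X_bracket t f g) = s_bracket t (sigma t f) (sigma t g)"
proof -
  obtain a b where ab: "b \<noteq> 0" "f = Fract a b" "pvars a \<subseteq> {v. valid_vert t v}" "pvars b \<subseteq> {v. valid_vert t v}"
    using assms(2) unfolding ratfun_in_def by blast
  obtain c d where cd: "d \<noteq> 0" "g = Fract c d" "pvars c \<subseteq> {v. valid_vert t v}" "pvars d \<subseteq> {v. valid_vert t v}"
    using assms(3) unfolding ratfun_in_def by blast
  define V where "V = pvars a \<union> pvars b \<union> pvars c \<union> pvars d"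
  have fV: "finite V" by (simp add: V_def finite_pvars)
  have Vval: "V \<subseteq> {v. valid_vert t v}" using ab cd by (auto simp: V_def)
  have fVf: "ratfun_in V f" unfolding ab(2) by (rule ratfun_inI[OF ab(1)]) (auto simp: V_def)
  have fVg: "ratfun_in V g" unfolding cd(2) by (rule ratfun_inI[OF cd(1)]) (auto simp: V_def)
  define W where "W = V \<union> vplus t ` V"
  have fW: "finite W" using fV by (simp add: W_def)
  have sfW: "ratfun_in W (sigma t f)" unfolding W_def by (rule ratfun_in_sigma[OF fVf])
  have sgW: "ratfun_in W (sigma t g)" unfolding W_def by (rule ratfun_in_sigma[OF fVg])
  let ?E = "\<lambda>u v. rconst (of_int (exch t u v))"
  let ?O = "\<lambda>w z. rconst (of_rat (s_omega t w z))"
  let ?Fu = "\<lambda>u. sigma t (rpderiv u f)" and ?Gv = "\<lambda>v. sigma t (rpderiv v g)"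
  have "sigma t (X_bracket t f g) = sigma t (lsum (\<lambda>u v. of_int (exch t u v)) V f g)"
    unfolding X_bracket_def by (simp only: logcan_eq[OF fV fVf fVg])
  also have "\<dots> = (\<Sum>u\<in>V. \<Sum>v\<in>V. ?E u v * sigma_gen t u * sigma_gen t v * ?Fu u * ?Gv v)"
    unfolding lsum_def by (simp add: sigma_sum sigma_mult sigma_rconst sigma_rvar)
  also have "\<dots> = (\<Sum>u\<in>V. \<Sum>v\<in>V. \<Sum>w\<in>W. \<Sum>z\<in>W. ?O w z * rvar w * rvar z *
            (?Fu u * rpderiv w (sigma_gen t u)) * (?Gv v * rpderiv z (sigma_gen t v)))"
  proof (intro sum.cong refl)
    fix u v assume u: "u \<in> V" and v: "v \<in> V"
    have uv: "valid_vert t u" "valid_vert t v" using u v Vval by auto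
    have "(\<Sum>w\<in>W. \<Sum>z\<in>W. ?O w z * rvar w * rvar z *
            (?Fu u * rpderiv w (sigma_gen t u)) * (?Gv v * rpderiv z (sigma_gen t v))) =
       ?Fu u * ?Gv v * sigma_gen t u * sigma_gen t v *
       rconst (of_rat (s_omega t u v - s_omega t u (vplus t v) - s_omega t (vplus t u) v + s_omega t (vplus t u) (vplus t v)))"
      using u v by (intro inner_identity fW) (auto simp: W_def)
    also have "\<dots> = ?E u v * sigma_gen t u * sigma_gen t v * ?Fu u * ?Gv v"
      unfolding comb_all[OF assms(1) uv] by (simp add: mult_ac)
    finally show "?E u v * sigma_gen t u * sigma_gen t v * ?Fu u * ?Gv v =
      (\<Sum>w\<in>W. \<Sum>z\<in>W. ?O w z * rvar w * rvar z *
            (?Fu u * rpderiv w (sigma_gen t u)) * (?Gv v * rpderiv z (sigma_gen t v)))" by simp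
  qed
  also have "\<dots> = (\<Sum>w\<in>W. \<Sum>z\<in>W. \<Sum>u\<in>V. \<Sum>v\<in>V. ?O w z * rvar w * rvar z *
            (?Fu u * rpderiv w (sigma_gen t u)) * (?Gv v * rpderiv z (sigma_gen t v)))"
    by (rule sum4_swap[symmetric])
  also have "\<dots> = (\<Sum>w\<in>W. \<Sum>z\<in>W. ?O w z * rvar w * rvar z *
            (\<Sum>u\<in>V. ?Fu u * rpderiv w (sigma_gen t u)) * (\<Sum>v\<in>V. ?Gv v * rpderiv z (sigma_gen t v)))"
    by (simp only: prod_sums) (simp only: mult.assoc)
  also have "\<dots> = (\<Sum>w\<in>W. \<Sum>z\<in>W. ?O w z * rvar w * rvar z *
            rpderiv w (sigma t f) * rpderiv z (sigma t g))"
    by (simp add: chain[OF fV fVf] chain[OF fV fVg])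
  also have "\<dots> = s_bracket t (sigma t f) (sigma t g)"
    unfolding s_bracket_def logcan_eq[OF fW sfW sgW] lsum_def by (rule refl)
  finally show ?thesis .
qed

end
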